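(* Under the standing assumptions below, with $I_d$ the identity operator on $\mathcal{W}^{k,p}(I)$, for every $f\in\mathcal{W}^{k,p}(I)$, $$\|\mathcal{F}^\alpha(f)-f\|_{\mathcal{W}^{k,p}}\le\frac{K}{1-K}\,\|I_d-L\|\,\|f\|_{\mathcal{W}^{k,p}}.$$
   Context: Standing assumptions: $k\in\mathbb{N}\cup\{0\}$, $1\le p\le\infty$; $I=[x_1,x_N]$, $N>2$, $x_1<\dots<x_N$, $I_i=[x_i,x_{i+1})$ for $i\le N-2$, $I_{N-1}=[x_{N-1},x_N]$; $L_i(x)=a_ix+d_i$ is the affine map with $L_i(x_1)=x_i$, $L_i(x_N)=x_{i+1}$. $\mathcal{W}^{k,p}(I)$ is the Sobolev space of $g$ with weak derivatives $D^jg\in\mathcal{L}^p(I)$, $0\le j\le k$, with norm $[\sum_{j=0}^k\|D^jg\|_p^p]^{1/p}$ ($p<\infty$) or $\sum_{j=0}^k\|D^jg\|_\infty$ ($p=\infty$); its elements are identified with their $\mathcal{C}^{k-1}$ representatives. $L:\mathcal{W}^{k,p}(I)\to\mathcal{W}^{k,p}(I)$ is a bounded linear operator with $D^r(Lf)(x_1)=D^rf(x_1)$, $D^r(Lf)(x_N)=D^rf(x_N)$ for all $f$ and $0\le r\le k-1$. The scaling factors $\alpha_1,\dots,\alpha_{N-1}$ are real constants with $K<1$, where $K=[\sum_{i=1}^{N-1}|\alpha_i|^p/a_i^{kp-1}]^{1/p}$ if $1\le p<\infty$ and $K=\max_i|\alpha_i|/a_i^k$ if $p=\infty$. For $f\in\mathcal{W}^{k,p}(I)$,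 $f^\alpha=\mathcal{F}^\alpha(f)$ is the unique function in $\mathcal{W}^{k,p}(I)$ with $D^rf^\alpha(x_1)=D^rf(x_1)$, $D^rf^\alpha(x_N)=D^rf(x_N)$ ($0\le r\le k-1$) satisfying $f^\alpha(x)=f(x)+\alpha_i(f^\alpha-Lf)(L_i^{-1}(x))$ for $x\in I_i$, $i=1,\dots,N-1$; $\mathcal{F}^\alpha$ is called the $\alpha$-fractal operator. *)

theory Defs
  imports "HOL-Analysis.Analysis" "HOL-Probability.Essential_Supremum"
begin

definition in_Lp :: "real set \<Rightarrow> ennreal \<Rightarrow> (real \<Rightarrow> real) \<Rightarrow> bool" where
  "in_Lp I p h \<longleftrightarrow> h \<in> borel_measurable (lebesgue_on I) \<and>
     (if p = \<infinity> then esssup (lebesgue_on I) (\<lambda>t. ereal \<bar>h t\<bar>) < \<infinity>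
      else (\<integral>\<^sup>+ t. ennreal (\<bar>h t\<bar> powr enn2real p) \<partial>lebesgue_on I) < \<infinity>)"

definition Lp_norm :: "real set \<Rightarrow> ennreal \<Rightarrow> (real \<Rightarrow> real) \<Rightarrow> real" where
  "Lp_norm I p h =
     (if p = \<infinity> then real_of_ereal (esssup (lebesgue_on I) (\<lambda>t. ereal \<bar>h t\<bar>))
      else (enn2real (\<integral>\<^sup>+ t. ennreal (\<bar>h t\<bar> powr enn2real p) \<partial>lebesgue_on I))
             powr (1 / enn2real p))"

definition test_fun :: "real \<Rightarrow> real \<Rightarrow> (real \<Rightarrow> real) \<Rightarrow> bool" where
  "test_fun a b \<phi> \<longleftrightarrow> (\<forall>n t. ((deriv ^^ n) \<phi>) differentiable (at t)) \<and>
     (\<exists>c d. a < c \<and> d < b \<and> (\<forall>t. t \<notin> {c..d} \<longrightarrow> \<phi> t = 0))"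

definition weak_deriv :: "real \<Rightarrow> real \<Rightarrow> nat \<Rightarrow> (real \<Rightarrow> real) \<Rightarrow> (real \<Rightarrow> real) \<Rightarrow> bool" where
  "weak_deriv a b j g h \<longleftrightarrow>
     integrable (lebesgue_on {a..b}) g \<and> integrable (lebesgue_on {a..b}) h \<and>
     (\<forall>\<phi>. test_fun a b \<phi> \<longrightarrow>
        (\<integral>t. g t * (deriv ^^ j) \<phi> t \<partial>lebesgue_on {a..b}) =
        (-1) ^ j * (\<integral>t. h t * \<phi> t \<partial>lebesgue_on {a..b}))"

definition sobolev :: "real \<Rightarrow> real \<Rightarrow> nat \<Rightarrow> ennreal \<Rightarrow> (real \<Rightarrow> real) \<Rightarrow> bool" where
  "sobolev a b k p g \<longleftrightarrow> (\<forall>j\<le>k. \<exists>h. weak_deriv a b j g h \<and> in_Lp {a..b} p h)"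

text \<open>D^j g (a chosen representative; determined almost everywhere).\<close>
definition wD :: "real \<Rightarrow> real \<Rightarrow> ennreal \<Rightarrow> nat \<Rightarrow> (real \<Rightarrow> real) \<Rightarrow> real \<Rightarrow> real" where
  "wD a b p j g = (SOME h. weak_deriv a b j g h \<and> in_Lp {a..b} p h)"

definition sob_norm :: "real \<Rightarrow> real \<Rightarrow> nat \<Rightarrow> ennreal \<Rightarrow> (real \<Rightarrow> real) \<Rightarrow> real" where
  "sob_norm a b k p g =
     (if p = \<infinity> then (\<Sum>j\<le>k. Lp_norm {a..b} p (wD a b p j g))
      else (\<Sum>j\<le>k. Lp_norm {a..b} p (wD a b p j g) powr enn2real p) powr (1 / enn2real p))"

text \<open>Value at t of the continuous representative of D^r g (meaningful for r \<le> k-1).\<close>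
definition dval :: "real \<Rightarrow> real \<Rightarrow> nat \<Rightarrow> (real \<Rightarrow> real) \<Rightarrow> real \<Rightarrow> real" where
  "dval a b r g t = (THE c. \<exists>h. weak_deriv a b r g h \<and> continuous_on {a..b} h \<and> h t = c)"

definition ae_eq :: "real \<Rightarrow> real \<Rightarrow> (real \<Rightarrow> real) \<Rightarrow> (real \<Rightarrow> real) \<Rightarrow> bool" where
  "ae_eq a b f g \<longleftrightarrow> (AE t in lebesgue_on {a..b}. f t = g t)"

definition bounded_linear_sob ::
  "real \<Rightarrow> real \<Rightarrow> nat \<Rightarrow> ennreal \<Rightarrow> ((real \<Rightarrow> real) \<Rightarrow> (real \<Rightarrow> real)) \<Rightarrow> bool" where
  "bounded_linear_sob a b k p T \<longleftrightarrow>
     (\<forall>f. sobolev a b k p f \<longrightarrow> sobolev a b k p (T f)) \<and>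
     (\<forall>f g c d. sobolev a b k p f \<longrightarrow> sobolev a b k p g \<longrightarrow>
        ae_eq a b (T (\<lambda>t. c * f t + d * g t)) (\<lambda>t. c * T f t + d * T g t)) \<and>
     (\<exists>C. \<forall>f. sobolev a b k p f \<longrightarrow> sob_norm a b k p (T f) \<le> C * sob_norm a b k p f)"

definition opnorm_Id_minus ::
  "real \<Rightarrow> real \<Rightarrow> nat \<Rightarrow> ennreal \<Rightarrow> ((real \<Rightarrow> real) \<Rightarrow> (real \<Rightarrow> real)) \<Rightarrow> real" where
  "opnorm_Id_minus a b k p L =
     Sup {sob_norm a b k p (\<lambda>t. f t - L f t) | f. sobolev a b k p f \<and> sob_norm a b k p f \<le> 1}"

definition aff_a :: "(nat \<Rightarrow> real) \<Rightarrow> nat \<Rightarrow> nat \<Rightarrow> real" where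
  "aff_a x N i = (x (i+1) - x i) / (x N - x 1)"

definition aff_d :: "(nat \<Rightarrow> real) \<Rightarrow> nat \<Rightarrow> nat \<Rightarrow> real" where
  "aff_d x N i = x i - aff_a x N i * x 1"

definition aff_inv :: "(nat \<Rightarrow> real) \<Rightarrow> nat \<Rightarrow> nat \<Rightarrow> real \<Rightarrow> real" where
  "aff_inv x N i y = (y - aff_d x N i) / aff_a x N i"

definition subint :: "(nat \<Rightarrow> real) \<Rightarrow> nat \<Rightarrow> nat \<Rightarrow> real set" where
  "subint x N i = (if i \<le> N - 2 then {x i..<x (i+1)} else {x i..x (i+1)})"

definition Kconst :: "(nat \<Rightarrow> real) \<Rightarrow> nat \<Rightarrow> nat \<Rightarrow> ennreal \<Rightarrow> (nat \<Rightarrow> real) \<Rightarrow> real" where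
  "Kconst x N k p \<alpha> =
     (if p = \<infinity> then Max ((\<lambda>i. \<bar>\<alpha> i\<bar> / aff_a x N i ^ k) ` {1..N-1})
      else (\<Sum>i=1..N-1. \<bar>\<alpha> i\<bar> powr enn2real p / aff_a x N i powr (real k * enn2real p - 1))
             powr (1 / enn2real p))"

text \<open>g is the alpha-fractal function f^alpha of f (equalities understood almost everywhere,
  as elements of W^{k,p} are equivalence classes).\<close>
definition is_alpha_fractal ::
  "(nat \<Rightarrow> real) \<Rightarrow> nat \<Rightarrow> nat \<Rightarrow> ennreal \<Rightarrow> ((real \<Rightarrow> real) \<Rightarrow> (real \<Rightarrow> real)) \<Rightarrow>
   (nat \<Rightarrow> real) \<Rightarrow> (real \<Rightarrow> real) \<Rightarrow> (real \<Rightarrow> real) \<Rightarrow> bool" where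
  "is_alpha_fractal x N k p L \<alpha> f g \<longleftrightarrow>
     sobolev (x 1) (x N) k p g \<and>
     (\<forall>r<k. dval (x 1) (x N) r g (x 1) = dval (x 1) (x N) r f (x 1) \<and>
            dval (x 1) (x N) r g (x N) = dval (x 1) (x N) r f (x N)) \<and>
     (\<forall>i\<in>{1..N-1}. AE t in lebesgue. t \<in> subint x N i \<longrightarrow>
        g t = f t + \<alpha> i * (g (aff_inv x N i t) - L f (aff_inv x N i t)))"

end

theory Submission
  imports Defs
begin

definition smn :: "nat \<Rightarrow> (real \<Rightarrow> real) \<Rightarrow> bool" where
  "smn n f \<longleftrightarrow> (\<forall>m\<le>n. \<forall>t. (deriv ^^ m) f differentiable (at t))"

lemma deriv_funpow_Suc: "(deriv ^^ Suc m) f = (deriv ^^ m) (deriv f)"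
  unfolding funpow_Suc_right o_apply by (rule refl)

lemma smn_0: "smn 0 f \<longleftrightarrow> (\<forall>t. f differentiable (at t))"
  by (simp add: smn_def)

lemma smn_Suc: "smn (Suc n) f \<longleftrightarrow> (\<forall>t. f differentiable (at t)) \<and> smn n (deriv f)"
proof
  assume a: "smn (Suc n) f"
  show "(\<forall>t. f differentiable (at t)) \<and> smn n (deriv f)"
    using a unfolding smn_def
    by (metis Suc_le_mono deriv_funpow_Suc funpow_0 zero_le)
next
  assume a: "(\<forall>t. f differentiable (at t)) \<and> smn n (deriv f)"
  show "smn (Suc n) f" unfolding smn_def
  proof (intro allI impI)
    fix m t assume "m \<le> Suc n"
    then show "(deriv ^^ m) f differentiable (at t)"
      using a unfolding smn_def
      by (cases m) (auto simp del: funpow.simps simp add: deriv_funpow_Suc)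
  qed
qed

lemma smn_mono: "smn (Suc n) f \<Longrightarrow> smn n f"
  by (auto simp: smn_def)

lemma smn_diff: "smn n f \<Longrightarrow> \<forall>t. f differentiable (at t)"
  by (auto simp: smn_def dest: spec[of _ 0])

lemma deriv_fun_eq: "(\<And>t. (f has_real_derivative f' t) (at t)) \<Longrightarrow> deriv f = f'"
  by (rule ext) (simp add: DERIV_imp_deriv)

lemma has_deriv_deriv: "f differentiable (at t) \<Longrightarrow> (f has_real_derivative deriv f t) (at t)"
  using DERIV_deriv_iff_real_differentiable by blast

lemma smn_add: "smn n f \<Longrightarrow> smn n g \<Longrightarrow> smn n (\<lambda>t. f t + g t)"
proof (induction n arbitrary: f g)
  case 0 then show ?case by (auto simp: smn_0)
next
  case (Suc n)
  have df: "\<forall>t. f differentiable (at t)" and dg: "\<forall>t. g differentiable (at t)"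
    using Suc.prems smn_Suc by auto
  have "deriv (\<lambda>t. f t + g t) = (\<lambda>t. deriv f t + deriv g t)"
    by (rule deriv_fun_eq) (use df dg in \<open>auto intro!: derivative_eq_intros has_deriv_deriv\<close>)
  then show ?case using Suc df dg by (auto simp: smn_Suc)
qed

lemma smn_const: "smn n (\<lambda>t. c)"
proof (induction n arbitrary: c)
  case 0 then show ?case by (auto simp: smn_0)
next
  case (Suc n)
  have "deriv (\<lambda>t. c) = (\<lambda>t. 0)" by (rule deriv_fun_eq) auto
  then show ?case using Suc by (auto simp: smn_Suc)
qed

lemma smn_mult: "smn n f \<Longrightarrow> smn n g \<Longrightarrow> smn n (\<lambda>t. f t * g t)"
proof (induction n arbitrary: f g)
  case 0 then show ?case by (auto simp: smn_0)
next
  case (Suc n)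
  have df: "\<forall>t. f differentiable (at t)" and dg: "\<forall>t. g differentiable (at t)"
    using Suc.prems smn_Suc by auto
  have "deriv (\<lambda>t. f t * g t) = (\<lambda>t. deriv f t * g t + f t * deriv g t)"
    by (rule deriv_fun_eq) (use df dg in \<open>auto intro!: derivative_eq_intros has_deriv_deriv\<close>)
  moreover have "smn n (\<lambda>t. deriv f t * g t + f t * deriv g t)"
    apply (rule smn_add; rule Suc.IH)
    using Suc.prems smn_Suc smn_mono by auto
  ultimately show ?case using df dg by (auto simp: smn_Suc)
qed

lemma smn_cmult: "smn n f \<Longrightarrow> smn n (\<lambda>t. c * f t)"
  using smn_mult[OF smn_const] by blast

lemma smn_affine: "smn n f \<Longrightarrow> smn n (\<lambda>t. f (c * t + d))"
proof (induction n arbitrary: f)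
  case 0
  then have "\<forall>t. f differentiable (at t)" by (simp add: smn_0)
  then show ?case unfolding smn_0
  proof (intro allI)
    fix t
    have "((\<lambda>t. c * t + d) has_real_derivative c) (at t)"
      by (auto intro!: derivative_eq_intros)
    from DERIV_chain2[OF has_deriv_deriv[OF \<open>\<forall>t. f differentiable (at t)\<close>[rule_format]] this]
    show "(\<lambda>t. f (c * t + d)) differentiable (at t)"
      using real_differentiable_def by blast
  qed
next
  case (Suc n)
  have df: "\<forall>t. f differentiable (at t)" using Suc.prems smn_Suc by auto
  have D: "\<And>t. ((\<lambda>t. f (c * t + d)) has_real_derivative c * deriv f (c * t + d)) (at t)"
  proof -
    fix t
    have "((\<lambda>t. c * t + d) has_real_derivative c) (at t)"
      by (auto intro!: derivative_eq_intros)
    from DERIV_chain2[OF has_deriv_deriv[OF df[rule_format]] this]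
    show "((\<lambda>t. f (c * t + d)) has_real_derivative c * deriv f (c * t + d)) (at t)"
      by (simp add: mult.commute)
  qed
  have "deriv (\<lambda>t. f (c * t + d)) = (\<lambda>t. c * deriv f (c * t + d))"
    by (rule deriv_fun_eq) (rule D)
  moreover have "smn n (\<lambda>t. c * deriv f (c * t + d))"
    using Suc smn_Suc smn_cmult by auto
  ultimately show ?case using D by (auto simp: smn_Suc real_differentiable_def)
qed

lemma smooth_deriv: "\<forall>n. smn n g \<Longrightarrow> \<forall>n. smn n (deriv g)"
  using smn_Suc by blast

lemma deriv_funpow_cmult:
  assumes "\<forall>n. smn n g"
  shows "(deriv ^^ j) (\<lambda>s. c * g s) = (\<lambda>s. c * (deriv ^^ j) g s)"
  using assms
proof (induction j arbitrary: g)
  case 0 then show ?case by simp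
next
  case (Suc j)
  have dg: "\<forall>t. g differentiable (at t)" using Suc.prems smn_diff by blast
  have "deriv (\<lambda>s. c * g s) = (\<lambda>s. c * deriv g s)"
    by (rule deriv_fun_eq) (use dg in \<open>auto intro!: derivative_eq_intros has_deriv_deriv\<close>)
  then show ?case using Suc.IH[OF smooth_deriv[OF Suc.prems]]
    by (simp del: funpow.simps add: deriv_funpow_Suc)
qed

lemma deriv_affine_funpow:
  assumes "\<forall>n. smn n f"
  shows "(deriv ^^ j) (\<lambda>t. f (c * t + d)) = (\<lambda>t. c ^ j * (deriv ^^ j) f (c * t + d))"
  using assms
proof (induction j arbitrary: f)
  case 0 then show ?case by simp
next
  case (Suc j)
  have df: "\<forall>t. f differentiable (at t)" using Suc.prems smn_diff by blast
  have "deriv (\<lambda>t. f (c * t + d)) = (\<lambda>t. c * deriv f (c * t + d))"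
  proof (rule deriv_fun_eq)
    fix t
    have "((\<lambda>t. c * t + d) has_real_derivative c) (at t)"
      by (auto intro!: derivative_eq_intros)
    from DERIV_chain2[OF has_deriv_deriv[OF df[rule_format]] this]
    show "((\<lambda>t. f (c * t + d)) has_real_derivative c * deriv f (c * t + d)) (at t)"
      by (simp add: mult.commute)
  qed
  then have "(deriv ^^ Suc j) (\<lambda>t. f (c * t + d)) = (deriv ^^ j) (\<lambda>t. c * deriv f (c * t + d))"
    by (simp del: funpow.simps add: deriv_funpow_Suc)
  also have "\<dots> = (\<lambda>t. c ^ j * (deriv ^^ j) (\<lambda>s. c * deriv f s) (c * t + d))"
  proof (rule Suc.IH, rule allI)
    fix n show "smn n (\<lambda>s. c * deriv f s)"
      using Suc.prems[rule_format, of "Suc n"] by (intro smn_cmult) (simp add: smn_Suc)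
  qed
  also have "\<dots> = (\<lambda>t. c ^ j * (c * (deriv ^^ j) (deriv f) (c * t + d)))"
    using deriv_funpow_cmult[OF smooth_deriv[OF Suc.prems]] by simp
  finally show ?case
    by (simp del: funpow.simps add: deriv_funpow_Suc power_Suc mult_ac)
qed

definition bT :: "nat \<Rightarrow> real \<Rightarrow> real" where
  "bT k x = (if x > 0 then inverse x ^ k * exp (- inverse x) else 0)"

lemma bT_deriv_pos:
  assumes "x > 0"
  shows "(bT k has_real_derivative (- real k * bT (Suc k) x + bT (Suc (Suc k)) x)) (at x)"
proof -
  have "((\<lambda>x. inverse x ^ k * exp (- inverse x)) has_real_derivative
        (- real k * (inverse x ^ Suc k * exp (- inverse x)) + inverse x ^ Suc (Suc k) * exp (- inverse x))) (at x)"
    using assms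
    apply (auto intro!: derivative_eq_intros)
    apply (cases k)
     apply (auto simp: field_simps power_Suc)
    done
  then have "(bT k has_real_derivative (- real k * (inverse x ^ Suc k * exp (- inverse x)) + inverse x ^ Suc (Suc k) * exp (- inverse x))) (at x)"
    apply (rule has_field_derivative_transform_within_open[where S="{0<..}"])
    using assms by (auto simp: bT_def)
  then show ?thesis using assms by (simp add: bT_def)
qed

lemma bT_deriv_neg:
  assumes "x < 0"
  shows "(bT k has_real_derivative (- real k * bT (Suc k) x + bT (Suc (Suc k)) x)) (at x)"
proof -
  have "((\<lambda>x. 0) has_real_derivative 0) (at x)" by simp
  then have "(bT k has_real_derivative 0) (at x)"
    apply (rule has_field_derivative_transform_within_open[where S="{..<0}"])
    using assms by (auto simp: bT_def)
  then show ?thesis using assms by (simp add: bT_def)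
qed

lemma bT_deriv_0:
  "(bT k has_real_derivative (- real k * bT (Suc k) 0 + bT (Suc (Suc k)) 0)) (at 0)"
proof -
  have "((\<lambda>y. (bT k y - bT k 0) / (y - 0)) \<longlongrightarrow> 0) (at (0::real))"
    unfolding filterlim_at_split
  proof
    have "eventually (\<lambda>y. 0 = (bT k y - bT k 0) / (y - 0)) (at_left (0::real))"
      unfolding eventually_at_filter by (auto simp: bT_def)
    then show "((\<lambda>y. (bT k y - bT k 0) / (y - 0)) \<longlongrightarrow> 0) (at_left 0)"
      by (rule Lim_transform_eventually[rotated]) (rule tendsto_const)
  next
    have "((\<lambda>u::real. u ^ Suc k / exp u) \<longlongrightarrow> 0) at_top" using tendsto_power_div_exp_0 by blast
    then have "((\<lambda>y. inverse y ^ Suc k / exp (inverse y)) \<longlongrightarrow> 0) (at_right (0::real))"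
      by (rule filterlim_compose) (rule filterlim_inverse_at_top_right)
    moreover have "eventually (\<lambda>y. inverse y ^ Suc k / exp (inverse y) = (bT k y - bT k 0) / (y - 0)) (at_right (0::real))"
      unfolding eventually_at_filter by (auto simp: bT_def exp_minus field_simps power_Suc)
    ultimately show "((\<lambda>y. (bT k y - bT k 0) / (y - 0)) \<longlongrightarrow> 0) (at_right 0)"
      by (rule Lim_transform_eventually)
  qed
  then show ?thesis by (simp add: has_field_derivative_iff bT_def)
qed

lemma bT_deriv: "(bT k has_real_derivative (- real k * bT (Suc k) x + bT (Suc (Suc k)) x)) (at x)"
  using bT_deriv_pos bT_deriv_neg bT_deriv_0 by (cases x "0::real" rule: linorder_cases) auto

lemma smn_bT: "smn n (bT k)"
proof (induction n arbitrary: k)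
  case 0 then show ?case using bT_deriv by (auto simp: smn_0 real_differentiable_def)
next
  case (Suc n)
  have "deriv (bT k) = (\<lambda>x. - real k * bT (Suc k) x + bT (Suc (Suc k)) x)"
    by (rule deriv_fun_eq) (rule bT_deriv)
  moreover have "smn n (\<lambda>x. - real k * bT (Suc k) x + bT (Suc (Suc k)) x)"
    by (intro smn_add smn_cmult Suc.IH)
  ultimately show ?case using bT_deriv by (auto simp: smn_Suc real_differentiable_def)
qed

definition psi :: "real \<Rightarrow> real" where "psi = bT 0"

lemma smooth_psi: "smn n psi" by (simp add: psi_def smn_bT)

lemma psi_nonneg: "0 \<le> psi x" by (simp add: psi_def bT_def)
lemma psi_le1: "psi x \<le> 1" by (simp add: psi_def bT_def)
lemma psi_zero: "x \<le> 0 \<Longrightarrow> psi x = 0" by (simp add: psi_def bT_def)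

lemma psi_lim: "(psi \<longlongrightarrow> 1) at_top"
proof -
  have "((\<lambda>x::real. exp (- inverse x)) \<longlongrightarrow> exp (- 0)) at_top"
    by (intro tendsto_intros tendsto_inverse_0_at_top filterlim_ident)
  moreover have "eventually (\<lambda>x::real. exp (- inverse x) = psi x) at_top"
    using eventually_gt_at_top[of 0] by eventually_elim (simp add: psi_def bT_def)
  ultimately show ?thesis by (simp add: Lim_transform_eventually)
qed

lemma testfun_smn: "test_fun a b \<phi> \<Longrightarrow> smn n \<phi>"
  by (auto simp: test_fun_def smn_def)

lemma smooth_iff: "(\<forall>n. smn n \<phi>) \<longleftrightarrow> (\<forall>n t. (deriv ^^ n) \<phi> differentiable (at t))"
  by (auto simp: smn_def)

lemma deriv_zero_outside:
  fixes c d t :: real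
  assumes "\<forall>t. t \<notin> {c..d} \<longrightarrow> f t = 0" "t \<notin> {c..d}"
  shows "deriv f t = 0"
proof -
  have "\<not> (c \<le> t \<and> t \<le> d)" using assms(2) by simp
  then have "t < c \<or> d < t" by linarith
  then have "(f has_real_derivative 0) (at t)"
  proof
    assume "t < c"
    show ?thesis
      by (rule has_field_derivative_transform_within_open[of "\<lambda>x. 0" 0 t "{..<c}"])
         (use assms \<open>t < c\<close> in auto)
  next
    assume "d < t"
    show ?thesis
      by (rule has_field_derivative_transform_within_open[of "\<lambda>x. 0" 0 t "{d<..}"])
         (use assms \<open>d < t\<close> in auto)
  qed
  then show ?thesis by (rule DERIV_imp_deriv)
qed

lemma derivn_zero_outside:
  fixes c d t :: real
  assumes "\<forall>t. t \<notin> {c..d} \<longrightarrow> f t = 0" "t \<notin> {c..d}"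
  shows "(deriv ^^ j) f t = 0"
  using assms(2)
proof (induction j arbitrary: t)
  case 0 then show ?case using assms(1) by simp
next
  case (Suc j)
  show ?case using deriv_zero_outside[of c d "(deriv ^^ j) f" t] Suc by simp
qed

lemma cont_derivn: "\<forall>n. smn n \<phi> \<Longrightarrow> continuous_on S ((deriv ^^ j) \<phi>)"
  by (simp add: continuous_at_imp_continuous_on differentiable_imp_continuous_within smooth_iff)

lemma integrable_mult_cont:
  fixes a b :: real and g \<psi> :: "real \<Rightarrow> real"
  assumes g: "integrable (lebesgue_on {a..b}) g" and c: "continuous_on {a..b} \<psi>"
  shows "integrable (lebesgue_on {a..b}) (\<lambda>t. g t * \<psi> t)"
proof -
  have "compact (\<psi> ` {a..b})" by (rule compact_continuous_image[OF c]) simp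
  then have "bounded (\<psi> ` {a..b})" by (rule compact_imp_bounded)
  then obtain B where B0: "\<forall>x\<in>\<psi> ` {a..b}. norm x \<le> B" unfolding bounded_iff by blast
  have B: "norm (\<psi> t) \<le> B" if "t \<in> {a..b}" for t using B0 that by blast
  have m: "\<psi> \<in> borel_measurable (lebesgue_on {a..b})"
    by (rule continuous_imp_measurable_on_sets_lebesgue[OF c]) auto
  have gm: "g \<in> borel_measurable (lebesgue_on {a..b})" using g by (rule borel_measurable_integrable)
  show ?thesis
  proof (rule Bochner_Integration.integrable_bound[where f="\<lambda>t. B * g t"])
    show "integrable (lebesgue_on {a..b}) (\<lambda>t. B * g t)" using g by simp
    show "(\<lambda>t. g t * \<psi> t) \<in> borel_measurable (lebesgue_on {a..b})"
      using m gm by (intro borel_measurable_times)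
    show "AE t in lebesgue_on {a..b}. norm (g t * \<psi> t) \<le> norm (B * g t)"
    proof (rule AE_I2)
      fix t assume "t \<in> space (lebesgue_on {a..b})"
      then have "t \<in> {a..b}" by simp
      then have "\<bar>\<psi> t\<bar> \<le> \<bar>B\<bar>" using B by fastforce
      then show "norm (g t * \<psi> t) \<le> norm (B * g t)"
        by (simp add: abs_mult mult.commute mult_right_mono)
    qed
  qed
qed

lemma seq_at_top_aff: "(c::real) > 0 \<Longrightarrow> filterlim (\<lambda>n. real (Suc n) * c + d) at_top sequentially"
proof -
  assume c: "c > 0"
  have "filterlim (\<lambda>n. c * real n) at_top sequentially"
    by (rule filterlim_tendsto_pos_mult_at_top[OF tendsto_const c filterlim_real_sequentially])
  then have "filterlim (\<lambda>n. c * real (Suc n)) at_top sequentially"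
    by (rule filterlim_sequentially_Suc[THEN iffD2])
  then have "filterlim (\<lambda>n. d + c * real (Suc n)) at_top sequentially"
    by (rule filterlim_tendsto_add_at_top[OF tendsto_const])
  then show ?thesis by (simp add: algebra_simps)
qed

definition cutoff :: "real \<Rightarrow> real \<Rightarrow> nat \<Rightarrow> real \<Rightarrow> real" where
  "cutoff y b n t = psi (real (Suc n) * t + (- real (Suc n) * y - 1)) *
                    psi ((- real (Suc n)) * t + (real (Suc n) * b - 1))"

lemma cutoff_test:
  fixes a b y :: real
  assumes "a \<le> y"
  shows "test_fun a b (cutoff y b n)"
proof -
  have sm: "\<forall>m. smn m (cutoff y b n)"
    unfolding cutoff_def by (intro allI smn_mult smn_affine smooth_psi)
  let ?c = "y + 1 / real (Suc n)" and ?d = "b - 1 / real (Suc n)"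
  have "0 < 1 / real (Suc n)" by simp
  then have "a < ?c" "?d < b" using assms by linarith+
  moreover have "\<forall>t. t \<notin> {?c..?d} \<longrightarrow> cutoff y b n t = 0"
  proof (intro allI impI)
    fix t assume "t \<notin> {?c..?d}"
    then have "t < ?c \<or> ?d < t" by auto
    then show "cutoff y b n t = 0"
    proof
      assume "t < ?c"
      then have "real (Suc n) * t + (- real (Suc n) * y - 1) \<le> 0"
        by (simp add: field_simps)
      then show ?thesis by (simp add: cutoff_def psi_zero)
    next
      assume "?d < t"
      then have "(- real (Suc n)) * t + (real (Suc n) * b - 1) \<le> 0"
        by (simp add: field_simps)
      then show ?thesis by (simp add: cutoff_def psi_zero)
    qed
  qed
  ultimately show ?thesis using sm unfolding test_fun_def smooth_iff by blast
qed

lemma cutoff_bounds: "0 \<le> cutoff y b n t" "cutoff y b n t \<le> 1"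
  unfolding cutoff_def by (auto intro: mult_nonneg_nonneg psi_nonneg mult_le_one psi_le1)

lemma cutoff_lim:
  fixes y b t :: real
  shows "(\<lambda>n. cutoff y b n t) \<longlonglongrightarrow> indicator {y<..<b} t"
proof (cases "y < t \<and> t < b")
  case True
  have 1: "(\<lambda>n. psi (real (Suc n) * t + (- real (Suc n) * y - 1))) \<longlonglongrightarrow> 1"
  proof -
    have "filterlim (\<lambda>n. real (Suc n) * (t - y) + (- 1)) at_top sequentially"
      using True by (intro seq_at_top_aff) simp
    from filterlim_compose[OF psi_lim this] show ?thesis by (simp add: algebra_simps)
  qed
  have 2: "(\<lambda>n. psi ((- real (Suc n)) * t + (real (Suc n) * b - 1))) \<longlonglongrightarrow> 1"
  proof -
    have "filterlim (\<lambda>n. real (Suc n) * (b - t) + (- 1)) at_top sequentially"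
      using True by (intro seq_at_top_aff) simp
    from filterlim_compose[OF psi_lim this] show ?thesis by (simp add: algebra_simps)
  qed
  show ?thesis using tendsto_mult[OF 1 2] True by (simp add: cutoff_def)
next
  case False
  then have "t \<le> y \<or> b \<le> t" by auto
  then have "\<And>n. cutoff y b n t = 0"
  proof
    fix n assume "t \<le> y"
    then have "real (Suc n) * t \<le> real (Suc n) * y" by (intro mult_left_mono) auto
    then have "real (Suc n) * t + (- real (Suc n) * y - 1) \<le> 0" by linarith
    then show "cutoff y b n t = 0" by (simp add: cutoff_def psi_zero)
  next
    fix n assume "b \<le> t"
    then have "real (Suc n) * b \<le> real (Suc n) * t" by (intro mult_left_mono) auto
    then have "(- real (Suc n)) * t + (real (Suc n) * b - 1) \<le> 0" by linarith
    then show "cutoff y b n t = 0" by (simp add: cutoff_def psi_zero)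
  qed
  then show ?thesis using False by (auto simp: indicator_def)
qed


lemma cont_cutoff: "continuous_on S (cutoff y b n)"
proof -
  have "\<forall>m. smn m (cutoff y b n)"
    unfolding cutoff_def by (intro allI smn_mult smn_affine smooth_psi)
  from cont_derivn[OF this, of S 0] show ?thesis by simp
qed

lemma indicator_meas_on:
  fixes a b :: real
  shows "(indicator {y<..<z} :: real \<Rightarrow> real) \<in> borel_measurable (lebesgue_on {a..b})"
  by (subst borel_measurable_indicator_iff) (simp add: sets_restrict_space_iff)

lemma FL_step1:
  fixes a b y :: real and h :: "real \<Rightarrow> real"
  assumes h: "integrable (lebesgue_on {a..b}) h"
    and orth: "\<forall>\<phi>. test_fun a b \<phi> \<longrightarrow> (\<integral>t. h t * \<phi> t \<partial>lebesgue_on {a..b}) = 0"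
    and y: "a \<le> y"
  shows "(\<integral>t. h t * indicator {y<..<b} t \<partial>lebesgue_on {a..b}) = 0"
proof -
  have hm: "h \<in> borel_measurable (lebesgue_on {a..b})" using h by (rule borel_measurable_integrable)
  have cm: "\<And>n. cutoff y b n \<in> borel_measurable (lebesgue_on {a..b})"
    by (rule continuous_imp_measurable_on_sets_lebesgue[OF cont_cutoff]) auto
  have lim: "(\<lambda>n. \<integral>t. h t * cutoff y b n t \<partial>lebesgue_on {a..b})
      \<longlonglongrightarrow> (\<integral>t. h t * indicator {y<..<b} t \<partial>lebesgue_on {a..b})"
  proof (rule integral_dominated_convergence[where w="\<lambda>t. norm (h t)"])
    show "(\<lambda>t. h t * indicator {y<..<b} t) \<in> borel_measurable (lebesgue_on {a..b})"
      using hm indicator_meas_on by (intro borel_measurable_times)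
    show "\<And>n. (\<lambda>t. h t * cutoff y b n t) \<in> borel_measurable (lebesgue_on {a..b})"
      using hm cm by (intro borel_measurable_times)
    show "integrable (lebesgue_on {a..b}) (\<lambda>t. norm (h t))" using h by simp
    show "AE t in lebesgue_on {a..b}. (\<lambda>n. h t * cutoff y b n t) \<longlonglongrightarrow> h t * indicator {y<..<b} t"
      by (rule AE_I2, rule tendsto_mult[OF tendsto_const cutoff_lim])
    show "\<And>n. AE t in lebesgue_on {a..b}. norm (h t * cutoff y b n t) \<le> norm (h t)"
    proof (rule AE_I2)
      fix n t
      have "\<bar>h t\<bar> * \<bar>cutoff y b n t\<bar> \<le> \<bar>h t\<bar> * 1"
        using cutoff_bounds[of y b n t] by (intro mult_left_mono) auto
      then show "norm (h t * cutoff y b n t) \<le> norm (h t)" by (simp add: abs_mult)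
    qed
  qed
  moreover have "\<And>n. (\<integral>t. h t * cutoff y b n t \<partial>lebesgue_on {a..b}) = 0"
    using orth cutoff_test[OF y] by blast
  ultimately have "(\<lambda>n. 0::real) \<longlonglongrightarrow> (\<integral>t. h t * indicator {y<..<b} t \<partial>lebesgue_on {a..b})"
    by simp
  then show ?thesis by (rule LIMSEQ_unique[OF tendsto_const, symmetric])
qed


lemma FL_step2:
  fixes a b :: real and h :: "real \<Rightarrow> real"
  assumes h: "integrable (lebesgue_on {a..b}) h"
    and orth: "\<forall>\<phi>. test_fun a b \<phi> \<longrightarrow> (\<integral>t. h t * \<phi> t \<partial>lebesgue_on {a..b}) = 0"
  shows "(\<integral>t. h t * indicator {x<..} t \<partial>lebesgue_on {a..b}) = 0"
proof (cases "b \<le> x")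
  case True
  have "(\<integral>t. h t * indicator {x<..} t \<partial>lebesgue_on {a..b}) = (\<integral>t. 0 \<partial>lebesgue_on {a..b})"
    by (rule Bochner_Integration.integral_cong) (use True in auto)
  then show ?thesis by simp
next
  case False
  define y where "y = max x a"
  have ay: "a \<le> y" by (simp add: y_def)
  have ae: "AE t in lebesgue_on {a..b}. h t * indicator {x<..} t = h t * indicator {y<..<b} t"
  proof -
    have "AE t in lebesgue. t \<noteq> a" "AE t in lebesgue. t \<noteq> b"
      by (intro AE_completion AE_lborel_singleton)+
    then have "AE t in lebesgue. t \<in> {a..b} \<longrightarrow> h t * indicator {x<..} t = h t * indicator {y<..<b} t"
      by eventually_elim (use False in \<open>auto simp: y_def indicator_def\<close>)
    then show ?thesis by (subst AE_restrict_space_iff) auto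
  qed
  have "(\<integral>t. h t * indicator {x<..} t \<partial>lebesgue_on {a..b}) = (\<integral>t. h t * indicator {y<..<b} t \<partial>lebesgue_on {a..b})"
  proof (rule Bochner_Integration.integral_cong_AE)
    have hm: "h \<in> borel_measurable (lebesgue_on {a..b})" using h by (rule borel_measurable_integrable)
    have "(indicator {x<..} :: real \<Rightarrow> real) \<in> borel_measurable (lebesgue_on {a..b})"
      by (subst borel_measurable_indicator_iff) (simp add: sets_restrict_space_iff)
    then show "(\<lambda>t. h t * indicator {x<..} t) \<in> borel_measurable (lebesgue_on {a..b})"
      using hm by (intro borel_measurable_times)
    show "(\<lambda>t. h t * indicator {y<..<b} t) \<in> borel_measurable (lebesgue_on {a..b})"
      using hm indicator_meas_on by (intro borel_measurable_times)
  qed (rule ae)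
  also have "\<dots> = 0" by (rule FL_step1[OF h orth ay])
  finally show ?thesis .
qed


lemma ennreal_neg_eq: "ennreal u = ennreal (- u) \<Longrightarrow> u = 0"
  by (cases "u > 0") (auto simp: ennreal_eq_0_iff ennreal_neg)

lemma FL:
  fixes a b :: real and h :: "real \<Rightarrow> real"
  assumes h: "integrable (lebesgue_on {a..b}) h"
    and orth: "\<forall>\<phi>. test_fun a b \<phi> \<longrightarrow> (\<integral>t. h t * \<phi> t \<partial>lebesgue_on {a..b}) = 0"
  shows "AE t in lebesgue_on {a..b}. h t = 0"
proof -
  define H where "H t = indicator {a..b} t * h t" for t
  have sab: "{a..b} \<inter> space lebesgue \<in> sets lebesgue" by simp
  have Hi: "integrable lebesgue H"
    using h unfolding H_def by (subst (asm) integrable_restrict_space[OF sab]) simp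
  then have "H \<in> borel_measurable lebesgue" by (rule borel_measurable_integrable)
  then obtain H' where H'm: "H' \<in> borel_measurable lborel" and HH': "AE t in lborel. H t = H' t"
    using completion_ex_borel_measurable_real by blast
  have HH'l: "AE t in lebesgue. H t = H' t" using HH' by (rule AE_completion)
  have H'il: "integrable lebesgue H'"
    by (rule integrable_cong_AE_imp[OF Hi _ HH'l]) (use H'm in \<open>auto intro: measurable_completion\<close>)
  have H'i: "integrable lborel H'" using H'il integrable_completion[OF H'm] by simp
  have int0: "(\<integral>t. H' t * indicator {x<..} t \<partial>lborel) = 0" for x
  proof -
    have m: "(\<lambda>t. H' t * indicator {x<..} t) \<in> borel_measurable lborel" using H'm by measurable
    have "(\<integral>t. H' t * indicator {x<..} t \<partial>lborel) = (\<integral>t. H' t * indicator {x<..} t \<partial>lebesgue)"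
      by (rule integral_completion[symmetric]) (use m in simp)
    also have "\<dots> = (\<integral>t. H t * indicator {x<..} t \<partial>lebesgue)"
    proof (rule integral_cong_AE)
      show "(\<lambda>t. H' t * indicator {x<..} t) \<in> borel_measurable lebesgue"
        using m by (auto intro: measurable_completion)
      have "H \<in> borel_measurable lebesgue" using Hi by (rule borel_measurable_integrable)
      moreover have "(indicator {x<..} :: real \<Rightarrow> real) \<in> borel_measurable lebesgue"
        by (rule measurable_completion) simp
      ultimately show "(\<lambda>t. H t * indicator {x<..} t) \<in> borel_measurable lebesgue"
        by (intro borel_measurable_times)
      show "AE t in lebesgue. H' t * indicator {x<..} t = H t * indicator {x<..} t"
        using HH'l by eventually_elim simp
    qed
    also have "\<dots> = (\<integral>t. h t * indicator {x<..} t \<partial>lebesgue_on {a..b})"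
      by (subst integral_restrict_space[OF sab]) (simp add: H_def mult_ac)
    also have "\<dots> = 0" by (rule FL_step2[OF h orth])
    finally show ?thesis .
  qed
  define P where "P t = ennreal (H' t)" for t
  define Q where "Q t = ennreal (- H' t)" for t
  have Pm: "P \<in> borel_measurable lborel" "Q \<in> borel_measurable lborel"
    using H'm unfolding P_def Q_def by measurable
  have dens_eq: "density lborel P = density lborel Q"
  proof (rule measure_eqI_lessThan)
    show "sets (density lborel P) = sets borel" "sets (density lborel Q) = sets borel" by simp_all
    fix x :: real
    have iP: "integrable lborel (\<lambda>t. max (H' t) 0 * indicator {x<..} t)"
      and iQ: "integrable lborel (\<lambda>t. max (- H' t) 0 * indicator {x<..} t)"
      using H'i by (auto intro!: integrable_mult_indicator[where 'b=real, simplified] simp: mult.commute)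
    have eP: "emeasure (density lborel P) {x<..} = ennreal (\<integral>t. max (H' t) 0 * indicator {x<..} t \<partial>lborel)"
      apply (subst emeasure_density[OF Pm(1)], simp)
      apply (subst nn_integral_eq_integral[OF iP, symmetric], simp)
      by (intro nn_integral_cong) (auto simp: P_def indicator_def max_def ennreal_neg)
    have eQ: "emeasure (density lborel Q) {x<..} = ennreal (\<integral>t. max (- H' t) 0 * indicator {x<..} t \<partial>lborel)"
      apply (subst emeasure_density[OF Pm(2)], simp)
      apply (subst nn_integral_eq_integral[OF iQ, symmetric], simp)
      by (intro nn_integral_cong) (auto simp: Q_def indicator_def max_def ennreal_neg)
    have "(\<integral>t. max (H' t) 0 * indicator {x<..} t \<partial>lborel) - (\<integral>t. max (- H' t) 0 * indicator {x<..} t \<partial>lborel)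
        = (\<integral>t. H' t * indicator {x<..} t \<partial>lborel)"
      by (subst Bochner_Integration.integral_diff[OF iP iQ, symmetric])
         (intro Bochner_Integration.integral_cong, auto simp: max_def indicator_def)
    then show "emeasure (density lborel P) {x<..} = emeasure (density lborel Q) {x<..}"
      using int0[of x] eP eQ by simp
    show "emeasure (density lborel P) {x<..} < \<infinity>" using eP by simp
  qed
  have fin: "integral\<^sup>N lborel P \<noteq> \<infinity>"
  proof -
    have "integral\<^sup>N lborel P \<le> (\<integral>\<^sup>+t. ennreal (norm (H' t)) \<partial>lborel)"
      by (intro nn_integral_mono) (auto simp: P_def)
    also have "\<dots> < \<infinity>" using H'i by (simp add: integrable_iff_bounded)
    finally show ?thesis by simp
  qed
  have "AE t in lborel. P t = Q t"
    using finite_density_unique[OF Pm(1) Pm(2) _ _ fin] dens_eq by auto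
  then have "AE t in lborel. H t = 0"
    using HH' by eventually_elim (auto simp: P_def Q_def dest: ennreal_neg_eq)
  then have "AE t in lebesgue. H t = 0" by (rule AE_completion)
  then have "AE t in lebesgue. t \<in> {a..b} \<longrightarrow> h t = 0"
    by eventually_elim (auto simp: H_def indicator_def)
  then show ?thesis by (subst AE_restrict_space_iff) auto
qed

lemma powr_le_self: "0 \<le> (z::real) \<Longrightarrow> z \<le> 1 \<Longrightarrow> 1 \<le> P \<Longrightarrow> z powr P \<le> z"
proof (cases "z = 0")
  case False
  assume "0 \<le> z" "z \<le> 1" "1 \<le> P"
  then have "z powr P \<le> z powr 1" using False by (intro powr_mono') auto
  then show ?thesis using False \<open>0 \<le> z\<close> by simp
qed simp

lemma conv_powr:
  fixes l x y P :: real
  assumes P: "1 \<le> P" and l: "0 \<le> l" "l \<le> 1" and xy: "0 \<le> x" "0 \<le> y"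
  shows "(l * x + (1 - l) * y) powr P \<le> l * x powr P + (1 - l) * y powr P"
proof -
  consider "x = 0" | "y = 0" | "x > 0" "y > 0" using xy by linarith
  then show ?thesis
  proof cases
    case 1
    have "((1 - l) * y) powr P = (1 - l) powr P * y powr P"
      using l xy by (simp add: powr_mult)
    also have "\<dots> \<le> (1 - l) * y powr P"
      using l P by (intro mult_right_mono powr_le_self) auto
    finally show ?thesis using 1 P by simp
  next
    case 2
    have "(l * x) powr P = l powr P * x powr P"
      using l xy by (simp add: powr_mult)
    also have "\<dots> \<le> l * x powr P"
      using l P by (intro mult_right_mono powr_le_self) auto
    finally show ?thesis using 2 P by simp
  next
    case 3
    show ?thesis
      using convex_onD[OF powr_convex[OF P], of "1 - l" x y] 3 l by auto
  qed
qed

lemma mink_pt: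
  fixes P s t A B :: real
  assumes P: "1 \<le> P" and st: "0 \<le> s" "0 \<le> t" and AB: "0 < A" "0 < B"
  shows "(s + t) powr P \<le> (A + B) powr P * (A / (A + B) * (s / A) powr P + B / (A + B) * (t / B) powr P)"
proof -
  define l where "l = A / (A + B)"
  have l: "0 \<le> l" "l \<le> 1" "1 - l = B / (A + B)" using AB by (auto simp: l_def field_simps)
  have h1: "A / (A + B) * (s / A) = s / (A + B)" using AB by (simp add: field_simps)
  have h2: "B / (A + B) * (t / B) = t / (A + B)" using AB by (simp add: field_simps)
  have e: "(A + B) * (A / (A + B) * (s / A) + B / (A + B) * (t / B)) = s + t"
    unfolding h1 h2 add_divide_distrib[symmetric] using AB by simp
  have "s + t = (A + B) * (l * (s / A) + (1 - l) * (t / B))"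
    unfolding l(3) using e by (simp add: l_def)
  then have "(s + t) powr P = (A + B) powr P * (l * (s / A) + (1 - l) * (t / B)) powr P"
    using AB st l by (simp add: powr_mult)
  also have "\<dots> \<le> (A + B) powr P * (l * (s / A) powr P + (1 - l) * (t / B) powr P)"
    using AB st l P by (intro mult_left_mono conv_powr) auto
  also have "\<dots> = (A + B) powr P * (A / (A + B) * (s / A) powr P + B / (A + B) * (t / B) powr P)"
    unfolding l(3) by (simp only: l_def)
  finally show ?thesis .
qed


lemma powr_pow_inv: "0 \<le> (x::real) \<Longrightarrow> 1 \<le> P \<Longrightarrow> (x powr (1/P)) powr P = x"
  by (simp add: powr_powr)

lemma minkowski_int:
  fixes u v :: "'a \<Rightarrow> real" and P :: real
  assumes P: "1 \<le> P" and um: "u \<in> borel_measurable M" and vm: "v \<in> borel_measurable M"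
    and ui: "integrable M (\<lambda>t. \<bar>u t\<bar> powr P)" and vi: "integrable M (\<lambda>t. \<bar>v t\<bar> powr P)"
  shows "integrable M (\<lambda>t. \<bar>u t + v t\<bar> powr P) \<and>
    (\<integral>t. \<bar>u t + v t\<bar> powr P \<partial>M) powr (1/P)
      \<le> (\<integral>t. \<bar>u t\<bar> powr P \<partial>M) powr (1/P) + (\<integral>t. \<bar>v t\<bar> powr P \<partial>M) powr (1/P)"
proof -
  define IU where "IU = (\<integral>t. \<bar>u t\<bar> powr P \<partial>M)"
  define IV where "IV = (\<integral>t. \<bar>v t\<bar> powr P \<partial>M)"
  define A where "A = IU powr (1/P)"
  define B where "B = IV powr (1/P)"
  have IU0: "0 \<le> IU" unfolding IU_def by (intro integral_nonneg_AE) auto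
  have IV0: "0 \<le> IV" unfolding IV_def by (intro integral_nonneg_AE) auto
  have A0: "0 \<le> A" "0 \<le> B" by (auto simp: A_def B_def)
  have wm: "(\<lambda>t. \<bar>u t + v t\<bar> powr P) \<in> borel_measurable M" using um vm by measurable
  have zero_case: "integrable M (\<lambda>t. \<bar>u t + v t\<bar> powr P) \<and>
      (\<integral>t. \<bar>u t + v t\<bar> powr P \<partial>M) powr (1/P) \<le> A + B"
    if u0: "IU = 0" and hyp: "integrable M (\<lambda>t. \<bar>v t\<bar> powr P)"
      and vmm: "v \<in> borel_measurable M" and B0: "0 \<le> A" and um': "u \<in> borel_measurable M"
      and ui': "integrable M (\<lambda>t. \<bar>u t\<bar> powr P)"
      and Bdef: "B = (\<integral>t. \<bar>v t\<bar> powr P \<partial>M) powr (1/P)"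
      and IUdef: "IU = (\<integral>t. \<bar>u t\<bar> powr P \<partial>M)"
    for u v :: "'a \<Rightarrow> real" and A B IU
  proof -
    have "AE t in M. \<bar>u t\<bar> powr P = 0"
      using integral_nonneg_eq_0_iff_AE[OF ui'] u0 IUdef by auto
    then have ae: "AE t in M. \<bar>u t + v t\<bar> powr P = \<bar>v t\<bar> powr P"
      by eventually_elim simp
    have wm': "(\<lambda>t. \<bar>u t + v t\<bar> powr P) \<in> borel_measurable M" using um' vmm by measurable
    have i: "integrable M (\<lambda>t. \<bar>u t + v t\<bar> powr P)"
      by (rule integrable_cong_AE_imp[OF hyp wm']) (use ae in \<open>auto elim: AE_mp\<close>)
    have "(\<integral>t. \<bar>u t + v t\<bar> powr P \<partial>M) = (\<integral>t. \<bar>v t\<bar> powr P \<partial>M)"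
      by (rule integral_cong_AE[OF wm']) (use vmm ae in auto)
    then show ?thesis using i B0 Bdef by simp
  qed
  show ?thesis
  proof (cases "IU = 0 \<or> IV = 0")
    case True
    then show ?thesis
    proof
      assume "IU = 0"
      from zero_case[OF this vi vm A0(1) um ui B_def[unfolded IV_def] IU_def] show ?thesis
        by (simp add: A_def B_def IU_def IV_def)
    next
      assume "IV = 0"
      from zero_case[where IU=IV and u=v and v=u and A=B and B=A, OF this ui um A0(2) vm vi A_def[unfolded IU_def] IV_def] show ?thesis
        by (simp add: A_def B_def IU_def IV_def add.commute)
    qed
  next
    case False
    then have Apos: "0 < A" "0 < B" using IU0 IV0 by (auto simp: A_def B_def)
    have AP: "A powr P = IU" "B powr P = IV" using IU0 IV0 P by (auto simp: A_def B_def powr_pow_inv)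
    define R where "R t = (A + B) powr P * (A / (A + B) * (\<bar>u t\<bar> powr P / IU) + B / (A + B) * (\<bar>v t\<bar> powr P / IV))" for t
    have bound: "\<bar>u t + v t\<bar> powr P \<le> R t" for t
    proof -
      have "\<bar>u t + v t\<bar> powr P \<le> (\<bar>u t\<bar> + \<bar>v t\<bar>) powr P"
        using P by (intro powr_mono2) auto
      also have "\<dots> \<le> (A + B) powr P * (A / (A + B) * (\<bar>u t\<bar> / A) powr P + B / (A + B) * (\<bar>v t\<bar> / B) powr P)"
        by (rule mink_pt[OF P _ _ Apos]) auto
      also have "\<dots> = R t"
        using Apos by (simp add: R_def powr_divide AP)
      finally show ?thesis .
    qed
    have Ri: "integrable M R" unfolding R_def using ui vi by simp
    have wi: "integrable M (\<lambda>t. \<bar>u t + v t\<bar> powr P)"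
    proof (rule Bochner_Integration.integrable_bound[OF Ri wm])
      show "AE t in M. norm (\<bar>u t + v t\<bar> powr P) \<le> norm (R t)"
        using bound by (intro AE_I2) (smt (verit) powr_ge_zero real_norm_def)
    qed
    have "(\<integral>t. \<bar>u t + v t\<bar> powr P \<partial>M) \<le> (\<integral>t. R t \<partial>M)"
      by (intro Bochner_Integration.integral_mono wi Ri bound)
    also have "(\<integral>t. R t \<partial>M) = (A + B) powr P * (A / (A + B) * (IU / IU) + B / (A + B) * (IV / IV))"
      unfolding R_def using ui vi by (simp add: IU_def IV_def)
    also have "\<dots> = (A + B) powr P"
    proof -
      have "A / (A + B) + B / (A + B) = 1" using Apos by (simp add: add_divide_distrib[symmetric])
      then show ?thesis using False by simp
    qed
    finally have "(\<integral>t. \<bar>u t + v t\<bar> powr P \<partial>M) powr (1/P) \<le> ((A + B) powr P) powr (1/P)"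
      using P by (intro powr_mono2) (auto intro: integral_nonneg_AE)
    also have "\<dots> = A + B" using Apos P by (simp add: powr_powr)
    finally show ?thesis using wi by (simp add: A_def B_def IU_def IV_def)
  qed
qed


lemma minkowski_sum:
  fixes a b :: "'a \<Rightarrow> real" and P :: real
  assumes J: "finite J" and P: "1 \<le> P" and ab: "\<And>j. 0 \<le> a j" "\<And>j. 0 \<le> b j"
  shows "(\<Sum>j\<in>J. (a j + b j) powr P) powr (1/P)
      \<le> (\<Sum>j\<in>J. a j powr P) powr (1/P) + (\<Sum>j\<in>J. b j powr P) powr (1/P)"
proof -
  have m: "f \<in> borel_measurable (count_space J)" for f :: "'a \<Rightarrow> real" by simp
  have i: "integrable (count_space J) f" for f :: "'a \<Rightarrow> real"
    using J by (simp add: integrable_count_space)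
  from minkowski_int[OF P m m i i, of a b] show ?thesis
    using J ab by (simp add: lebesgue_integral_count_space_finite)
qed

lemma P_ge1: "1 \<le> p \<Longrightarrow> p \<noteq> \<infinity> \<Longrightarrow> 1 \<le> enn2real p"
  by (metis enn2real_1 enn2real_mono infinity_ennreal_def top.not_eq_extremum)

lemma in_Lp_fin:
  fixes a b :: real
  assumes "p \<noteq> \<infinity>"
  shows "in_Lp {a..b} p h \<longleftrightarrow> h \<in> borel_measurable (lebesgue_on {a..b}) \<and>
            integrable (lebesgue_on {a..b}) (\<lambda>t. \<bar>h t\<bar> powr enn2real p)"
proof
  assume h: "in_Lp {a..b} p h"
  then have m: "h \<in> borel_measurable (lebesgue_on {a..b})" by (simp add: in_Lp_def)
  then have m2: "(\<lambda>t. \<bar>h t\<bar> powr enn2real p) \<in> borel_measurable (lebesgue_on {a..b})" by measurable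
  have "(\<integral>\<^sup>+ t. ennreal (\<bar>h t\<bar> powr enn2real p) \<partial>lebesgue_on {a..b}) < \<infinity>"
    using h assms by (simp add: in_Lp_def)
  then show "h \<in> borel_measurable (lebesgue_on {a..b}) \<and>
            integrable (lebesgue_on {a..b}) (\<lambda>t. \<bar>h t\<bar> powr enn2real p)"
    using m m2 by (simp add: integrable_iff_bounded)
next
  assume h: "h \<in> borel_measurable (lebesgue_on {a..b}) \<and>
            integrable (lebesgue_on {a..b}) (\<lambda>t. \<bar>h t\<bar> powr enn2real p)"
  then show "in_Lp {a..b} p h" using assms
    by (simp add: in_Lp_def integrable_iff_bounded)
qed

lemma Lp_norm_fin:
  fixes a b :: real
  assumes "p \<noteq> \<infinity>" "in_Lp {a..b} p h"
  shows "Lp_norm {a..b} p h = (\<integral>t. \<bar>h t\<bar> powr enn2real p \<partial>lebesgue_on {a..b}) powr (1 / enn2real p)"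
proof -
  have i: "integrable (lebesgue_on {a..b}) (\<lambda>t. \<bar>h t\<bar> powr enn2real p)"
    using assms in_Lp_fin by blast
  have "(\<integral>\<^sup>+ t. ennreal (\<bar>h t\<bar> powr enn2real p) \<partial>lebesgue_on {a..b})
      = ennreal (\<integral>t. \<bar>h t\<bar> powr enn2real p \<partial>lebesgue_on {a..b})"
    by (rule nn_integral_eq_integral[OF i]) simp
  then show ?thesis using assms by (simp add: Lp_norm_def integral_nonneg_AE)
qed

lemma Lp_norm_inf:
  "Lp_norm I \<infinity> h = real_of_ereal (esssup (lebesgue_on I) (\<lambda>t. ereal \<bar>h t\<bar>))"
  by (simp add: Lp_norm_def)

lemma esssup_abs_nonneg:
  fixes a b :: real
  assumes "a < b"
  shows "0 \<le> esssup (lebesgue_on {a..b}) (\<lambda>t. ereal \<bar>h t\<bar>)"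
proof -
  have "emeasure (lebesgue_on {a..b}) (space (lebesgue_on {a..b})) \<noteq> 0"
    using assms by (simp add: emeasure_restrict_space)
  then have "esssup (lebesgue_on {a..b}) (\<lambda>t. 0::ereal) = 0" by (rule esssup_const)
  moreover have "esssup (lebesgue_on {a..b}) (\<lambda>t. 0::ereal) \<le> esssup (lebesgue_on {a..b}) (\<lambda>t. ereal \<bar>h t\<bar>)"
    by (rule esssup_mono) auto
  ultimately show ?thesis by simp
qed

lemma Lp_norm_nonneg:
  fixes a b :: real
  assumes "a < b"
  shows "0 \<le> Lp_norm {a..b} p h"
  using esssup_abs_nonneg[OF assms, of h] by (simp add: Lp_norm_def real_of_ereal_pos)


lemma Lp_norm_cong:
  fixes a b :: real
  assumes ae: "AE t in lebesgue_on {a..b}. h t = h' t"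
    and m: "h \<in> borel_measurable (lebesgue_on {a..b})" "h' \<in> borel_measurable (lebesgue_on {a..b})"
  shows "Lp_norm {a..b} p h = Lp_norm {a..b} p h'" "in_Lp {a..b} p h \<longleftrightarrow> in_Lp {a..b} p h'"
proof -
  have e1: "(\<integral>\<^sup>+ t. ennreal (\<bar>h t\<bar> powr enn2real p) \<partial>lebesgue_on {a..b})
      = (\<integral>\<^sup>+ t. ennreal (\<bar>h' t\<bar> powr enn2real p) \<partial>lebesgue_on {a..b})"
    by (rule nn_integral_cong_AE) (use ae in \<open>eventually_elim, simp\<close>)
  have e2: "esssup (lebesgue_on {a..b}) (\<lambda>t. ereal \<bar>h t\<bar>) = esssup (lebesgue_on {a..b}) (\<lambda>t. ereal \<bar>h' t\<bar>)"
    by (rule esssup_AE_cong) (use m ae in \<open>auto elim: AE_mp\<close>)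
  show "Lp_norm {a..b} p h = Lp_norm {a..b} p h'" unfolding Lp_norm_def e1 e2 ..
  show "in_Lp {a..b} p h \<longleftrightarrow> in_Lp {a..b} p h'" unfolding in_Lp_def e1 e2 using m by simp
qed

lemma real_of_ereal_mono': "0 \<le> x \<Longrightarrow> x \<le> y \<Longrightarrow> y < \<infinity> \<Longrightarrow> real_of_ereal x \<le> real_of_ereal y"
  by (cases x; cases y) auto

lemma Lp_tri:
  fixes a b :: real
  assumes ab: "a < b" and p: "1 \<le> p" and u: "in_Lp {a..b} p u" and v: "in_Lp {a..b} p v"
  shows "in_Lp {a..b} p (\<lambda>t. u t + v t) \<and>
         Lp_norm {a..b} p (\<lambda>t. u t + v t) \<le> Lp_norm {a..b} p u + Lp_norm {a..b} p v"
proof (cases "p = \<infinity>")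
  case False
  have P: "1 \<le> enn2real p" using P_ge1[OF p False] .
  have um: "u \<in> borel_measurable (lebesgue_on {a..b})" and ui: "integrable (lebesgue_on {a..b}) (\<lambda>t. \<bar>u t\<bar> powr enn2real p)"
    using u in_Lp_fin[OF False] by auto
  have vm: "v \<in> borel_measurable (lebesgue_on {a..b})" and vi: "integrable (lebesgue_on {a..b}) (\<lambda>t. \<bar>v t\<bar> powr enn2real p)"
    using v in_Lp_fin[OF False] by auto
  note mk = minkowski_int[OF P um vm ui vi]
  have wm: "(\<lambda>t. u t + v t) \<in> borel_measurable (lebesgue_on {a..b})" using um vm by measurable
  have w: "in_Lp {a..b} p (\<lambda>t. u t + v t)" using mk wm in_Lp_fin[OF False] by auto
  show ?thesis using w mk by (simp add: Lp_norm_fin[OF False] u v)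
next
  case True
  let ?M = "lebesgue_on {a..b}"
  have um: "u \<in> borel_measurable ?M" and vm: "v \<in> borel_measurable ?M"
    using u v by (auto simp: in_Lp_def)
  have uf: "esssup ?M (\<lambda>t. ereal \<bar>u t\<bar>) < \<infinity>" and vf: "esssup ?M (\<lambda>t. ereal \<bar>v t\<bar>) < \<infinity>"
    using u v True by (auto simp: in_Lp_def)
  have "esssup ?M (\<lambda>t. ereal \<bar>u t + v t\<bar>) \<le> esssup ?M (\<lambda>t. ereal \<bar>u t\<bar> + ereal \<bar>v t\<bar>)"
    by (rule esssup_mono) (use um vm in \<open>auto\<close>)
  also have "\<dots> \<le> esssup ?M (\<lambda>t. ereal \<bar>u t\<bar>) + esssup ?M (\<lambda>t. ereal \<bar>v t\<bar>)"
    by (rule esssup_add)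
  finally have le: "esssup ?M (\<lambda>t. ereal \<bar>u t + v t\<bar>) \<le> esssup ?M (\<lambda>t. ereal \<bar>u t\<bar>) + esssup ?M (\<lambda>t. ereal \<bar>v t\<bar>)" .
  have sf: "esssup ?M (\<lambda>t. ereal \<bar>u t\<bar>) + esssup ?M (\<lambda>t. ereal \<bar>v t\<bar>) < \<infinity>"
    using uf vf esssup_abs_nonneg[OF ab, of u] esssup_abs_nonneg[OF ab, of v] by (simp add: ereal_add_strict_mono2)
  have w: "in_Lp {a..b} p (\<lambda>t. u t + v t)" using le sf um vm True by (auto simp: in_Lp_def)
  have "real_of_ereal (esssup ?M (\<lambda>t. ereal \<bar>u t + v t\<bar>))
     \<le> real_of_ereal (esssup ?M (\<lambda>t. ereal \<bar>u t\<bar>) + esssup ?M (\<lambda>t. ereal \<bar>v t\<bar>))"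
    by (rule real_of_ereal_mono'[OF esssup_abs_nonneg[OF ab] le sf])
  also have "\<dots> = real_of_ereal (esssup ?M (\<lambda>t. ereal \<bar>u t\<bar>)) + real_of_ereal (esssup ?M (\<lambda>t. ereal \<bar>v t\<bar>))"
    using uf vf esssup_abs_nonneg[OF ab, of u] esssup_abs_nonneg[OF ab, of v]
    by (intro real_of_ereal_add[THEN trans]) auto
  finally show ?thesis using w True by (simp add: Lp_norm_def)
qed


lemma Lp_cmult:
  fixes a b :: real
  assumes ab: "a < b" and p: "1 \<le> p" and h: "in_Lp {a..b} p h"
  shows "in_Lp {a..b} p (\<lambda>t. c * h t) \<and> Lp_norm {a..b} p (\<lambda>t. c * h t) = \<bar>c\<bar> * Lp_norm {a..b} p h"
proof (cases "p = \<infinity>")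
  case False
  let ?P = "enn2real p"
  have P: "1 \<le> ?P" using P_ge1[OF p False] .
  have hm: "h \<in> borel_measurable (lebesgue_on {a..b})" and hi: "integrable (lebesgue_on {a..b}) (\<lambda>t. \<bar>h t\<bar> powr ?P)"
    using h in_Lp_fin[OF False] by auto
  have eq: "\<bar>c * h t\<bar> powr ?P = \<bar>c\<bar> powr ?P * \<bar>h t\<bar> powr ?P" for t
    by (simp add: abs_mult powr_mult)
  have ci: "integrable (lebesgue_on {a..b}) (\<lambda>t. \<bar>c * h t\<bar> powr ?P)"
    unfolding eq using hi by simp
  have cm: "(\<lambda>t. c * h t) \<in> borel_measurable (lebesgue_on {a..b})" using hm by measurable
  have w: "in_Lp {a..b} p (\<lambda>t. c * h t)" using ci cm in_Lp_fin[OF False] by auto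
  have I0: "0 \<le> (\<integral>t. \<bar>h t\<bar> powr ?P \<partial>lebesgue_on {a..b})" by (intro integral_nonneg_AE) auto
  have "Lp_norm {a..b} p (\<lambda>t. c * h t) = (\<bar>c\<bar> powr ?P * (\<integral>t. \<bar>h t\<bar> powr ?P \<partial>lebesgue_on {a..b})) powr (1 / ?P)"
    by (simp add: Lp_norm_fin[OF False w] eq)
  also have "\<dots> = \<bar>c\<bar> * (\<integral>t. \<bar>h t\<bar> powr ?P \<partial>lebesgue_on {a..b}) powr (1 / ?P)"
    using P I0 by (simp add: powr_mult powr_powr)
  finally show ?thesis using w by (simp add: Lp_norm_fin[OF False h])
next
  case True
  let ?M = "lebesgue_on {a..b}"
  have hm: "h \<in> borel_measurable ?M" and hf: "esssup ?M (\<lambda>t. ereal \<bar>h t\<bar>) < \<infinity>"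
    using h True by (auto simp: in_Lp_def)
  have cm: "(\<lambda>t. c * h t) \<in> borel_measurable ?M" using hm by measurable
  show ?thesis
  proof (cases "c = 0")
    case True
    have "emeasure ?M (space ?M) \<noteq> 0" using ab by (simp add: emeasure_restrict_space)
    then have "esssup ?M (\<lambda>t. ereal 0) = 0" using esssup_const[of ?M "ereal 0"] by simp
    then show ?thesis using True \<open>p = \<infinity>\<close> cm by (simp add: in_Lp_def Lp_norm_def)
  next
    case False
    have "esssup ?M (\<lambda>t. ereal \<bar>c * h t\<bar>) = esssup ?M (\<lambda>t. ereal \<bar>c\<bar> * ereal \<bar>h t\<bar>)"
      by (simp add: abs_mult)
    also have "\<dots> = ereal \<bar>c\<bar> * esssup ?M (\<lambda>t. ereal \<bar>h t\<bar>)"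
      using False by (intro esssup_cmult) simp
    finally have e: "esssup ?M (\<lambda>t. ereal \<bar>c * h t\<bar>) = ereal \<bar>c\<bar> * esssup ?M (\<lambda>t. ereal \<bar>h t\<bar>)" .
    have fin: "ereal \<bar>c\<bar> * esssup ?M (\<lambda>t. ereal \<bar>h t\<bar>) < \<infinity>"
      using hf esssup_abs_nonneg[OF ab, of h] by (cases "esssup ?M (\<lambda>t. ereal \<bar>h t\<bar>)") auto
    show ?thesis using e fin cm \<open>p = \<infinity>\<close> by (simp add: in_Lp_def Lp_norm_def real_of_ereal_mult)
  qed
qed

lemma testfun_cont: "test_fun a b \<phi> \<Longrightarrow> continuous_on S ((deriv ^^ j) \<phi>)"
  by (intro cont_derivn) (auto intro: testfun_smn)

lemma wd_int:
  fixes a b :: real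
  assumes "integrable (lebesgue_on {a..b}) g" "test_fun a b \<phi>"
  shows "integrable (lebesgue_on {a..b}) (\<lambda>t. g t * (deriv ^^ j) \<phi> t)"
  by (rule integrable_mult_cont[OF assms(1) testfun_cont[OF assms(2)]])

lemma weak_deriv_unique:
  fixes a b :: real
  assumes ab: "a < b" and h1: "weak_deriv a b j g h1" and h2: "weak_deriv a b j g h2"
  shows "AE t in lebesgue_on {a..b}. h1 t = h2 t"
proof -
  have i1: "integrable (lebesgue_on {a..b}) h1" and i2: "integrable (lebesgue_on {a..b}) h2"
    using h1 h2 by (auto simp: weak_deriv_def)
  have "AE t in lebesgue_on {a..b}. h1 t - h2 t = 0"
  proof (rule FL)
    show "integrable (lebesgue_on {a..b}) (\<lambda>t. h1 t - h2 t)" using i1 i2 by simp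
    show "\<forall>\<phi>. test_fun a b \<phi> \<longrightarrow> (\<integral>t. (h1 t - h2 t) * \<phi> t \<partial>lebesgue_on {a..b}) = 0"
    proof (intro allI impI)
      fix \<phi> assume \<phi>: "test_fun a b \<phi>"
      have j1: "integrable (lebesgue_on {a..b}) (\<lambda>t. h1 t * \<phi> t)"
        using wd_int[OF i1 \<phi>, of 0] by simp
      have j2: "integrable (lebesgue_on {a..b}) (\<lambda>t. h2 t * \<phi> t)"
        using wd_int[OF i2 \<phi>, of 0] by simp
      have "(-1::real) ^ j * (\<integral>t. h1 t * \<phi> t \<partial>lebesgue_on {a..b}) = (-1) ^ j * (\<integral>t. h2 t * \<phi> t \<partial>lebesgue_on {a..b})"
        using h1 h2 \<phi> by (auto simp: weak_deriv_def)
      then have "(\<integral>t. h1 t * \<phi> t \<partial>lebesgue_on {a..b}) = (\<integral>t. h2 t * \<phi> t \<partial>lebesgue_on {a..b})"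
        by simp
      then show "(\<integral>t. (h1 t - h2 t) * \<phi> t \<partial>lebesgue_on {a..b}) = 0"
        using j1 j2 by (simp add: left_diff_distrib)
    qed
  qed
  then show ?thesis by eventually_elim simp
qed

lemma weak_deriv_lin:
  fixes a b :: real
  assumes u: "weak_deriv a b j u hu" and v: "weak_deriv a b j v hv"
  shows "weak_deriv a b j (\<lambda>t. c * u t + d * v t) (\<lambda>t. c * hu t + d * hv t)"
  unfolding weak_deriv_def
proof (intro conjI allI impI)
  have iu: "integrable (lebesgue_on {a..b}) u" "integrable (lebesgue_on {a..b}) hu"
    and iv: "integrable (lebesgue_on {a..b}) v" "integrable (lebesgue_on {a..b}) hv"
    using u v by (auto simp: weak_deriv_def)
  show "integrable (lebesgue_on {a..b}) (\<lambda>t. c * u t + d * v t)" using iu iv by simp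
  show "integrable (lebesgue_on {a..b}) (\<lambda>t. c * hu t + d * hv t)" using iu iv by simp
  fix \<phi> assume \<phi>: "test_fun a b \<phi>"
  have k1: "integrable (lebesgue_on {a..b}) (\<lambda>t. u t * (deriv ^^ j) \<phi> t)"
    "integrable (lebesgue_on {a..b}) (\<lambda>t. v t * (deriv ^^ j) \<phi> t)"
    using wd_int[OF iu(1) \<phi>] wd_int[OF iv(1) \<phi>] by auto
  have k2: "integrable (lebesgue_on {a..b}) (\<lambda>t. hu t * \<phi> t)"
    "integrable (lebesgue_on {a..b}) (\<lambda>t. hv t * \<phi> t)"
    using wd_int[OF iu(2) \<phi>, of 0] wd_int[OF iv(2) \<phi>, of 0] by auto
  have e1: "(\<integral>t. u t * (deriv ^^ j) \<phi> t \<partial>lebesgue_on {a..b}) = (-1) ^ j * (\<integral>t. hu t * \<phi> t \<partial>lebesgue_on {a..b})"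
    and e2: "(\<integral>t. v t * (deriv ^^ j) \<phi> t \<partial>lebesgue_on {a..b}) = (-1) ^ j * (\<integral>t. hv t * \<phi> t \<partial>lebesgue_on {a..b})"
    using u v \<phi> by (auto simp: weak_deriv_def)
  have "(\<integral>t. (c * u t + d * v t) * (deriv ^^ j) \<phi> t \<partial>lebesgue_on {a..b})
      = c * (\<integral>t. u t * (deriv ^^ j) \<phi> t \<partial>lebesgue_on {a..b}) + d * (\<integral>t. v t * (deriv ^^ j) \<phi> t \<partial>lebesgue_on {a..b})"
    using k1 by (simp add: distrib_right mult.assoc)
  also have "\<dots> = (-1) ^ j * (c * (\<integral>t. hu t * \<phi> t \<partial>lebesgue_on {a..b}) + d * (\<integral>t. hv t * \<phi> t \<partial>lebesgue_on {a..b}))"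
    by (simp add: e1 e2 algebra_simps)
  also have "\<dots> = (-1) ^ j * (\<integral>t. (c * hu t + d * hv t) * \<phi> t \<partial>lebesgue_on {a..b})"
    using k2 by (simp add: distrib_right mult.assoc)
  finally show "(\<integral>t. (c * u t + d * v t) * (deriv ^^ j) \<phi> t \<partial>lebesgue_on {a..b})
      = (-1) ^ j * (\<integral>t. (c * hu t + d * hv t) * \<phi> t \<partial>lebesgue_on {a..b})" .
qed

lemma weak_deriv_cong:
  fixes a b :: real
  assumes g: "integrable (lebesgue_on {a..b}) g" and g': "integrable (lebesgue_on {a..b}) g'"
    and ae: "AE t in lebesgue_on {a..b}. g t = g' t"
  shows "weak_deriv a b j g = weak_deriv a b j g'"
proof (rule ext)
  fix h
  have "(\<integral>t. g t * (deriv ^^ j) \<phi> t \<partial>lebesgue_on {a..b}) = (\<integral>t. g' t * (deriv ^^ j) \<phi> t \<partial>lebesgue_on {a..b})"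
    if "test_fun a b \<phi>" for \<phi>
    by (rule integral_cong_AE)
       (use wd_int[OF g that] wd_int[OF g' that] ae in \<open>auto intro: borel_measurable_integrable elim: AE_mp\<close>)
  then show "weak_deriv a b j g h = weak_deriv a b j g' h"
    using g g' unfolding weak_deriv_def by auto
qed


lemma wD_prop:
  assumes "sobolev a b k p f" "j \<le> k"
  shows "weak_deriv a b j f (wD a b p j f) \<and> in_Lp {a..b} p (wD a b p j f)"
  using assms unfolding sobolev_def wD_def by (metis (mono_tags, lifting) someI_ex)

lemma sobolev_int: "sobolev a b k p f \<Longrightarrow> integrable (lebesgue_on {a..b}) f"
  unfolding sobolev_def weak_deriv_def by blast

lemma in_Lp_meas: "in_Lp I p h \<Longrightarrow> h \<in> borel_measurable (lebesgue_on I)"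
  by (simp add: in_Lp_def)

lemma sobolev_lin:
  fixes a b :: real
  assumes ab: "a < b" and p: "1 \<le> p" and u: "sobolev a b k p u" and v: "sobolev a b k p v"
  shows "sobolev a b k p (\<lambda>t. c * u t + d * v t)"
    "\<And>j. j \<le> k \<Longrightarrow> AE t in lebesgue_on {a..b}.
        wD a b p j (\<lambda>t. c * u t + d * v t) t = c * wD a b p j u t + d * wD a b p j v t"
proof -
  have L: "weak_deriv a b j (\<lambda>t. c * u t + d * v t) (\<lambda>t. c * wD a b p j u t + d * wD a b p j v t) \<and>
           in_Lp {a..b} p (\<lambda>t. c * wD a b p j u t + d * wD a b p j v t)" if j: "j \<le> k" for j
  proof
    show "weak_deriv a b j (\<lambda>t. c * u t + d * v t) (\<lambda>t. c * wD a b p j u t + d * wD a b p j v t)"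
      by (rule weak_deriv_lin) (use wD_prop[OF u j] wD_prop[OF v j] in auto)
    have "in_Lp {a..b} p (\<lambda>t. c * wD a b p j u t)" "in_Lp {a..b} p (\<lambda>t. d * wD a b p j v t)"
      using Lp_cmult[OF ab p] wD_prop[OF u j] wD_prop[OF v j] by auto
    then show "in_Lp {a..b} p (\<lambda>t. c * wD a b p j u t + d * wD a b p j v t)"
      using Lp_tri[OF ab p] by blast
  qed
  then show S: "sobolev a b k p (\<lambda>t. c * u t + d * v t)" unfolding sobolev_def by blast
  fix j assume j: "j \<le> k"
  show "AE t in lebesgue_on {a..b}.
        wD a b p j (\<lambda>t. c * u t + d * v t) t = c * wD a b p j u t + d * wD a b p j v t"
    by (rule weak_deriv_unique[OF ab]) (use wD_prop[OF S j] L[OF j] in auto)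
qed

lemma sob_norm_cong:
  fixes a b :: real
  assumes g: "integrable (lebesgue_on {a..b}) g" and g': "integrable (lebesgue_on {a..b}) g'"
    and ae: "AE t in lebesgue_on {a..b}. g t = g' t"
  shows "sob_norm a b k p g = sob_norm a b k p g'" "sobolev a b k p g = sobolev a b k p g'"
proof -
  have "\<And>j. weak_deriv a b j g = weak_deriv a b j g'" by (rule weak_deriv_cong[OF g g' ae])
  have "\<And>q j. wD a b q j g = wD a b q j g'"
    using \<open>\<And>j. weak_deriv a b j g = weak_deriv a b j g'\<close> unfolding wD_def by simp
  then show "sob_norm a b k p g = sob_norm a b k p g'" unfolding sob_norm_def by simp
  show "sobolev a b k p g = sobolev a b k p g'"
    unfolding sobolev_def using \<open>\<And>j. weak_deriv a b j g = weak_deriv a b j g'\<close> by simp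
qed

lemma sob_norm_nonneg:
  fixes a b :: real
  assumes "a < b"
  shows "0 \<le> sob_norm a b k p g"
  unfolding sob_norm_def using Lp_norm_nonneg[OF assms] by (auto intro: sum_nonneg)

lemma Lp_wD_cong:
  fixes a b :: real
  assumes "a < b" "sobolev a b k p g" "j \<le> k" "in_Lp {a..b} p h"
    and "AE t in lebesgue_on {a..b}. wD a b p j g t = h t"
  shows "Lp_norm {a..b} p (wD a b p j g) = Lp_norm {a..b} p h"
  using Lp_norm_cong(1)[OF assms(5) in_Lp_meas in_Lp_meas] wD_prop[OF assms(2,3)] assms(4) by blast


lemma sobolev_add:
  fixes a b :: real
  assumes ab: "a < b" and p: "1 \<le> p" and u: "sobolev a b k p u" and v: "sobolev a b k p v"
  shows "sobolev a b k p (\<lambda>t. u t + v t)"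
    "\<And>j. j \<le> k \<Longrightarrow> AE t in lebesgue_on {a..b}.
        wD a b p j (\<lambda>t. u t + v t) t = wD a b p j u t + wD a b p j v t"
  using sobolev_lin[OF ab p u v, where c=1 and d=1] by auto

lemma sobolev_scale:
  fixes a b :: real
  assumes ab: "a < b" and p: "1 \<le> p" and u: "sobolev a b k p u"
  shows "sobolev a b k p (\<lambda>t. c * u t)"
    "\<And>j. j \<le> k \<Longrightarrow> AE t in lebesgue_on {a..b}.
        wD a b p j (\<lambda>t. c * u t) t = c * wD a b p j u t"
  using sobolev_lin[OF ab p u u, where c=c and d=0] by auto

lemma sobolev_diff:
  fixes a b :: real
  assumes ab: "a < b" and p: "1 \<le> p" and u: "sobolev a b k p u" and v: "sobolev a b k p v"
  shows "sobolev a b k p (\<lambda>t. u t - v t)"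
  using sobolev_lin(1)[OF ab p u v, where c=1 and d="-1"] by simp

lemma sob_tri:
  fixes a b :: real
  assumes ab: "a < b" and p: "1 \<le> p" and u: "sobolev a b k p u" and v: "sobolev a b k p v"
  shows "sob_norm a b k p (\<lambda>t. u t + v t) \<le> sob_norm a b k p u + sob_norm a b k p v"
proof -
  let ?n = "\<lambda>g j. Lp_norm {a..b} p (wD a b p j g)"
  have tri: "?n (\<lambda>t. u t + v t) j \<le> ?n u j + ?n v j" if j: "j \<le> k" for j
  proof -
    have "?n (\<lambda>t. u t + v t) j = Lp_norm {a..b} p (\<lambda>t. wD a b p j u t + wD a b p j v t)"
      by (rule Lp_wD_cong[OF ab sobolev_add(1)[OF ab p u v] j])
         (use Lp_tri[OF ab p] wD_prop[OF u j] wD_prop[OF v j] sobolev_add(2)[OF ab p u v j] in auto)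
    also have "\<dots> \<le> ?n u j + ?n v j"
      using Lp_tri[OF ab p] wD_prop[OF u j] wD_prop[OF v j] by blast
    finally show ?thesis .
  qed
  show ?thesis
  proof (cases "p = \<infinity>")
    case True
    have "(\<Sum>j\<le>k. ?n (\<lambda>t. u t + v t) j) \<le> (\<Sum>j\<le>k. ?n u j + ?n v j)"
      by (rule sum_mono) (use tri in simp)
    then show ?thesis unfolding sob_norm_def using True by (simp add: sum.distrib)
  next
    case False
    let ?P = "enn2real p"
    have P: "1 \<le> ?P" using P_ge1[OF p False] .
    have "(\<Sum>j\<le>k. ?n (\<lambda>t. u t + v t) j powr ?P) powr (1 / ?P) \<le> (\<Sum>j\<le>k. (?n u j + ?n v j) powr ?P) powr (1 / ?P)"
      using P tri Lp_norm_nonneg[OF ab]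
      by (intro powr_mono2 sum_mono sum_nonneg) auto
    also have "\<dots> \<le> (\<Sum>j\<le>k. ?n u j powr ?P) powr (1 / ?P) + (\<Sum>j\<le>k. ?n v j powr ?P) powr (1 / ?P)"
      by (rule minkowski_sum) (use P Lp_norm_nonneg[OF ab] in auto)
    finally show ?thesis unfolding sob_norm_def using False by simp
  qed
qed

lemma sob_cmult:
  fixes a b :: real
  assumes ab: "a < b" and p: "1 \<le> p" and u: "sobolev a b k p u"
  shows "sob_norm a b k p (\<lambda>t. c * u t) = \<bar>c\<bar> * sob_norm a b k p u"
proof -
  let ?n = "\<lambda>g j. Lp_norm {a..b} p (wD a b p j g)"
  have e: "?n (\<lambda>t. c * u t) j = \<bar>c\<bar> * ?n u j" if j: "j \<le> k" for j
  proof -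
    have "?n (\<lambda>t. c * u t) j = Lp_norm {a..b} p (\<lambda>t. c * wD a b p j u t)"
      by (rule Lp_wD_cong[OF ab sobolev_scale(1)[OF ab p u] j])
         (use Lp_cmult[OF ab p] wD_prop[OF u j] sobolev_scale(2)[OF ab p u j] in auto)
    also have "\<dots> = \<bar>c\<bar> * ?n u j"
      using Lp_cmult[OF ab p] wD_prop[OF u j] by blast
    finally show ?thesis .
  qed
  show ?thesis
  proof (cases "p = \<infinity>")
    case True
    then show ?thesis unfolding sob_norm_def using e by (simp add: sum_distrib_left)
  next
    case False
    let ?P = "enn2real p"
    have P: "1 \<le> ?P" using P_ge1[OF p False] .
    have "(\<Sum>j\<le>k. ?n (\<lambda>t. c * u t) j powr ?P) = (\<Sum>j\<le>k. \<bar>c\<bar> powr ?P * ?n u j powr ?P)"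
      using e Lp_norm_nonneg[OF ab] by (intro sum.cong) (auto simp: powr_mult)
    also have "\<dots> = \<bar>c\<bar> powr ?P * (\<Sum>j\<le>k. ?n u j powr ?P)" by (simp add: sum_distrib_left)
    finally have "(\<Sum>j\<le>k. ?n (\<lambda>t. c * u t) j powr ?P) powr (1 / ?P)
        = \<bar>c\<bar> * (\<Sum>j\<le>k. ?n u j powr ?P) powr (1 / ?P)"
      using P by (simp add: powr_mult powr_powr sum_nonneg)
    then show ?thesis unfolding sob_norm_def using False by simp
  qed
qed


lemma sob_diff_le:
  fixes a b :: real
  assumes ab: "a < b" and p: "1 \<le> p" and u: "sobolev a b k p u" and v: "sobolev a b k p v"
  shows "sob_norm a b k p (\<lambda>t. u t - v t) \<le> sob_norm a b k p u + sob_norm a b k p v"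
proof -
  have v': "sobolev a b k p (\<lambda>t. (-1) * v t)" by (rule sobolev_scale(1)[OF ab p v])
  have "sob_norm a b k p (\<lambda>t. u t + (-1) * v t) \<le> sob_norm a b k p u + sob_norm a b k p (\<lambda>t. (-1) * v t)"
    by (rule sob_tri[OF ab p u v'])
  also have "sob_norm a b k p (\<lambda>t. (-1) * v t) = sob_norm a b k p v"
    using sob_cmult[OF ab p v, of "-1"] by simp
  finally show ?thesis by simp
qed

lemma opnorm_bound:
  fixes a b :: real
  assumes ab: "a < b" and p: "1 \<le> p" and L: "bounded_linear_sob a b k p L" and f: "sobolev a b k p f"
  shows "sob_norm a b k p (\<lambda>t. f t - L f t) \<le> opnorm_Id_minus a b k p L * sob_norm a b k p f"
proof -
  have Ls: "\<And>g. sobolev a b k p g \<Longrightarrow> sobolev a b k p (L g)" using L by (simp add: bounded_linear_sob_def)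
  have Llin: "\<And>f g c d. sobolev a b k p f \<Longrightarrow> sobolev a b k p g \<Longrightarrow>
        ae_eq a b (L (\<lambda>t. c * f t + d * g t)) (\<lambda>t. c * L f t + d * L g t)"
    using L by (simp add: bounded_linear_sob_def)
  obtain C where C: "\<And>g. sobolev a b k p g \<Longrightarrow> sob_norm a b k p (L g) \<le> C * sob_norm a b k p g"
    using L by (auto simp: bounded_linear_sob_def)
  have bnd: "sob_norm a b k p (\<lambda>t. g t - L g t) \<le> sob_norm a b k p g + C * sob_norm a b k p g"
    if g: "sobolev a b k p g" for g
    using sob_diff_le[OF ab p g Ls[OF g]] C[OF g] by linarith
  define S where "S = {sob_norm a b k p (\<lambda>t. f t - L f t) | f. sobolev a b k p f \<and> sob_norm a b k p f \<le> 1}"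
  have opn: "opnorm_Id_minus a b k p L = Sup S" unfolding S_def opnorm_Id_minus_def ..
  have bdd: "bdd_above S"
  proof (rule bdd_aboveI)
    fix x assume "x \<in> S"
    then obtain g where g: "sobolev a b k p g" "sob_norm a b k p g \<le> 1" and x: "x = sob_norm a b k p (\<lambda>t. g t - L g t)"
      unfolding S_def by blast
    have "C * sob_norm a b k p g \<le> \<bar>C\<bar> * 1"
      using g(2) sob_norm_nonneg[OF ab, of k p g] abs_ge_self[of C]
      by (meson abs_ge_zero mult_mono order_trans)
    then show "x \<le> 1 + \<bar>C\<bar>" using bnd[OF g(1)] g(2) x by linarith
  qed
  let ?s = "sob_norm a b k p f"
  show ?thesis
  proof (cases "?s = 0")
    case True
    have "sob_norm a b k p (\<lambda>t. f t - L f t) \<le> 0" using bnd[OF f] True by simp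
    moreover have "0 \<le> sob_norm a b k p (\<lambda>t. f t - L f t)" by (rule sob_norm_nonneg[OF ab])
    ultimately show ?thesis using True by simp
  next
    case False
    then have spos: "?s > 0" using sob_norm_nonneg[OF ab, of k p f] by linarith
    define g where "g = (\<lambda>t. (1 / ?s) * f t)"
    have gs: "sobolev a b k p g" unfolding g_def by (rule sobolev_scale(1)[OF ab p f])
    have gn: "sob_norm a b k p g = 1" unfolding g_def using sob_cmult[OF ab p f, of "1 / ?s"] spos by simp
    have eqg: "(\<lambda>t. (1 / ?s) * f t + 0 * f t) = g" by (simp add: g_def)
    have aeL: "AE t in lebesgue_on {a..b}. L g t = (1 / ?s) * L f t"
      using Llin[OF f f, of "1 / ?s" 0] unfolding eqg ae_eq_def by simp
    have fL: "sobolev a b k p (\<lambda>t. f t - L f t)" by (rule sobolev_diff[OF ab p f Ls[OF f]])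
    have gL: "sobolev a b k p (\<lambda>t. g t - L g t)" by (rule sobolev_diff[OF ab p gs Ls[OF gs]])
    have sfL: "sobolev a b k p (\<lambda>t. (1 / ?s) * (f t - L f t))" by (rule sobolev_scale(1)[OF ab p fL])
    have "sob_norm a b k p (\<lambda>t. g t - L g t) = sob_norm a b k p (\<lambda>t. (1 / ?s) * (f t - L f t))"
    proof (rule sob_norm_cong(1))
      show "integrable (lebesgue_on {a..b}) (\<lambda>t. g t - L g t)" using sobolev_int[OF gL] .
      show "integrable (lebesgue_on {a..b}) (\<lambda>t. (1 / ?s) * (f t - L f t))" using sobolev_int[OF sfL] .
      show "AE t in lebesgue_on {a..b}. g t - L g t = 1 / ?s * (f t - L f t)"
        using aeL by eventually_elim (simp add: g_def right_diff_distrib)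
    qed
    also have "\<dots> = (1 / ?s) * sob_norm a b k p (\<lambda>t. f t - L f t)"
      using sob_cmult[OF ab p fL, of "1 / ?s"] spos by simp
    finally have e: "sob_norm a b k p (\<lambda>t. g t - L g t) = (1 / ?s) * sob_norm a b k p (\<lambda>t. f t - L f t)" .
    have "sob_norm a b k p (\<lambda>t. g t - L g t) \<in> S" unfolding S_def using gs gn by auto
    then have "sob_norm a b k p (\<lambda>t. g t - L g t) \<le> opnorm_Id_minus a b k p L"
      unfolding opn using bdd by (rule cSup_upper)
    then have "(1 / ?s) * sob_norm a b k p (\<lambda>t. f t - L f t) \<le> opnorm_Id_minus a b k p L" using e by simp
    then show ?thesis using spos by (simp add: field_simps)
  qed
qed

lemma aff_mem:
  fixes A D a b s :: real
  assumes "A > 0"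
  shows "(D + A * s \<in> {A * a + D..A * b + D}) = (s \<in> {a..b})"
  using assms by (auto simp: mult_le_cancel_left_pos)

lemma aff_ind:
  fixes A D a b s :: real
  assumes "A > 0"
  shows "(indicator {A * a + D..A * b + D} (D + A * s) :: real) = indicator {a..b} s"
  using aff_mem[OF assms] by (simp add: indicator_def)

lemma CV_integral:
  fixes A D a b :: real and F :: "real \<Rightarrow> real"
  assumes A: "A > 0"
  shows "(\<integral>t. F t \<partial>lebesgue_on {A * a + D..A * b + D}) = A * (\<integral>s. F (A * s + D) \<partial>lebesgue_on {a..b})"
proof -
  have "(\<integral>t. F t \<partial>lebesgue_on {A * a + D..A * b + D}) = (\<integral>t. indicator {A * a + D..A * b + D} t * F t \<partial>lebesgue)"
    by (subst integral_restrict_space) auto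
  also have "\<dots> = \<bar>A\<bar> *\<^sub>R (\<integral>s. indicator {A * a + D..A * b + D} (D + A * s) * F (D + A * s) \<partial>lebesgue)"
    by (rule lebesgue_integral_real_affine) (use A in simp)
  also have "\<dots> = A * (\<integral>s. indicator {a..b} s * F (A * s + D) \<partial>lebesgue)"
    unfolding aff_ind[OF A] using A by (simp add: add.commute)
  also have "\<dots> = A * (\<integral>s. F (A * s + D) \<partial>lebesgue_on {a..b})"
    by (subst integral_restrict_space) auto
  finally show ?thesis .
qed

lemma CV_integrable:
  fixes A D a b :: real and F :: "real \<Rightarrow> real"
  assumes A: "A > 0"
  shows "integrable (lebesgue_on {A * a + D..A * b + D}) F \<longleftrightarrow> integrable (lebesgue_on {a..b}) (\<lambda>s. F (A * s + D))"
proof -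
  have "integrable (lebesgue_on {A * a + D..A * b + D}) F \<longleftrightarrow> integrable lebesgue (\<lambda>t. indicator {A * a + D..A * b + D} t * F t)"
    by (subst integrable_restrict_space) auto
  also have "\<dots> \<longleftrightarrow> integrable lebesgue (\<lambda>s. indicator {A * a + D..A * b + D} (D + A * s) * F (D + A * s))"
    by (rule lebesgue_integrable_real_affine_iff[symmetric]) (use A in simp)
  also have "\<dots> \<longleftrightarrow> integrable lebesgue (\<lambda>s. indicator {a..b} s * F (A * s + D))"
    unfolding aff_ind[OF A] by (simp add: add.commute)
  also have "\<dots> \<longleftrightarrow> integrable (lebesgue_on {a..b}) (\<lambda>s. F (A * s + D))"
    by (subst integrable_restrict_space) auto
  finally show ?thesis .
qed

lemma CV_meas:
  fixes A D a b :: real and F :: "real \<Rightarrow> real"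
  assumes A: "A > 0" and F: "F \<in> borel_measurable (lebesgue_on {A * a + D..A * b + D})"
  shows "(\<lambda>s. F (A * s + D)) \<in> borel_measurable (lebesgue_on {a..b})"
proof -
  have "(\<lambda>t. indicator {A * a + D..A * b + D} t *\<^sub>R F t) \<in> borel_measurable lebesgue"
    using F by (subst (asm) borel_measurable_restrict_space_iff) auto
  then have "(\<lambda>s. indicator {A * a + D..A * b + D} (D + A *\<^sub>R s) *\<^sub>R F (D + A *\<^sub>R s)) \<in> borel_measurable lebesgue"
    by (rule borel_measurable_affine) (use A in simp)
  then have "(\<lambda>s. indicator {a..b} s *\<^sub>R F (A * s + D)) \<in> borel_measurable lebesgue"
    unfolding real_scaleR_def aff_ind[OF A] by (simp add: add.commute)
  then show ?thesis by (subst borel_measurable_restrict_space_iff) auto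
qed

lemma CV_AE:
  fixes A D a b :: real
  assumes A: "A > 0" and Pm: "{t \<in> space lebesgue. t \<in> {A * a + D..A * b + D} \<longrightarrow> P ((t - D) / A)} \<in> sets lebesgue"
    and ae: "AE s in lebesgue_on {a..b}. P s"
  shows "AE t in lebesgue_on {A * a + D..A * b + D}. P ((t - D) / A)"
proof -
  let ?T = "\<lambda>s. D + A * s"
  have Tm: "?T \<in> lebesgue \<rightarrow>\<^sub>M lebesgue"
    using lebesgue_affine_measurable[where c="\<lambda>x::real. A"] A by simp
  have "AE s in lebesgue. s \<in> {a..b} \<longrightarrow> P s" using ae by (subst (asm) AE_restrict_space_iff) auto
  then have "AE s in lebesgue. ?T s \<in> {A * a + D..A * b + D} \<longrightarrow> P ((?T s - D) / A)"
    by eventually_elim (use A in \<open>simp add: aff_mem\<close>)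
  then have "AE t in distr lebesgue lebesgue ?T. t \<in> {A * a + D..A * b + D} \<longrightarrow> P ((t - D) / A)"
    by (subst AE_distr_iff[OF Tm Pm])
  then have "AE t in density (distr lebesgue lebesgue ?T) (\<lambda>_. ennreal \<bar>A\<bar>). t \<in> {A * a + D..A * b + D} \<longrightarrow> P ((t - D) / A)"
    by (subst AE_density) (auto elim: AE_mp)
  moreover have L: "lebesgue = density (distr lebesgue lebesgue ?T) (\<lambda>_. ennreal \<bar>A\<bar>)"
    by (rule lebesgue_real_affine) (use A in simp)
  ultimately have "AE t in lebesgue. t \<in> {A * a + D..A * b + D} \<longrightarrow> P ((t - D) / A)"
    by (simp only: L[symmetric])
  then show ?thesis by (subst AE_restrict_space_iff) auto
qed


lemma CV_meas_inv:
  fixes A D a b :: real and F :: "real \<Rightarrow> real"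
  assumes A: "A > 0" and F: "F \<in> borel_measurable (lebesgue_on {a..b})"
  shows "(\<lambda>t. F ((t - D) / A)) \<in> borel_measurable (lebesgue_on {A * a + D..A * b + D})"
proof -
  have e: "{a..b} = {(1/A) * (A * a + D) + (- D / A)..(1/A) * (A * b + D) + (- D / A)}"
    using A by (simp add: field_simps)
  have "(\<lambda>t. F ((1/A) * t + (- D / A))) \<in> borel_measurable (lebesgue_on {A * a + D..A * b + D})"
    by (rule CV_meas) (use A F e in auto)
  moreover have "(\<lambda>t. F ((1/A) * t + (- D / A))) = (\<lambda>t. F ((t - D) / A))"
    using A by (simp add: field_simps)
  ultimately show ?thesis by simp
qed

lemma integrable_sub:
  fixes a b c d :: real and W :: "real \<Rightarrow> real"
  assumes W: "integrable (lebesgue_on {a..b}) W" and sub: "{c..d} \<subseteq> {a..b}"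
  shows "integrable (lebesgue_on {c..d}) W"
proof -
  have "integrable lebesgue (\<lambda>t. indicator {a..b} t *\<^sub>R W t)"
    using W by (subst (asm) integrable_restrict_space) auto
  then have "integrable lebesgue (\<lambda>t. indicator {c..d} t *\<^sub>R (indicator {a..b} t *\<^sub>R W t))"
    by (rule integrable_mult_indicator[rotated]) simp
  moreover have "(\<lambda>t. indicator {c..d} t *\<^sub>R (indicator {a..b} t *\<^sub>R W t)) = (\<lambda>t. indicator {c..d} t *\<^sub>R W t)"
    using sub by (auto simp: indicator_def)
  ultimately show ?thesis by (subst integrable_restrict_space) auto
qed

lemma meas_sub:
  fixes a b c d :: real and W :: "real \<Rightarrow> real"
  assumes W: "W \<in> borel_measurable (lebesgue_on {a..b})" and sub: "{c..d} \<subseteq> {a..b}"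
  shows "W \<in> borel_measurable (lebesgue_on {c..d})"
proof -
  have m1: "(\<lambda>t. indicator {a..b} t *\<^sub>R W t) \<in> borel_measurable lebesgue"
    using W by (subst (asm) borel_measurable_restrict_space_iff) auto
  have m2: "(indicator {c..d} :: real \<Rightarrow> real) \<in> borel_measurable lebesgue"
    by (rule measurable_completion) simp
  have "(\<lambda>t. indicator {c..d} t *\<^sub>R (indicator {a..b} t *\<^sub>R W t)) \<in> borel_measurable lebesgue"
    unfolding real_scaleR_def using borel_measurable_times[OF m2 m1[unfolded real_scaleR_def]] .
  moreover have "(\<lambda>t. indicator {c..d} t *\<^sub>R (indicator {a..b} t *\<^sub>R W t)) = (\<lambda>t. indicator {c..d} t *\<^sub>R W t)"
    using sub by (auto simp: indicator_def)
  ultimately show ?thesis by (subst borel_measurable_restrict_space_iff) auto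
qed

lemma int_sub_eq:
  fixes a b c d :: real and F :: "real \<Rightarrow> real"
  assumes sub: "{c..d} \<subseteq> {a..b}" and z: "\<And>t. t \<notin> {c..d} \<Longrightarrow> F t = 0"
  shows "(\<integral>t. F t \<partial>lebesgue_on {c..d}) = (\<integral>t. F t \<partial>lebesgue_on {a..b})"
proof -
  have "(\<lambda>t. indicator {c..d} t *\<^sub>R F t) = (\<lambda>t. indicator {a..b} t *\<^sub>R F t)"
  proof (rule ext)
    fix t show "indicator {c..d} t *\<^sub>R F t = indicator {a..b} t *\<^sub>R F t"
      using sub z[of t] by (cases "t \<in> {c..d}") (auto simp: indicator_def)
  qed
  then show ?thesis by (subst (1 2) integral_restrict_space) auto
qed


lemma testfun_affine:
  fixes A D a b :: real
  assumes A: "A > 0" and \<phi>: "test_fun (A * a + D) (A * b + D) \<phi>"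
  shows "test_fun a b (\<lambda>s. \<phi> (A * s + D))"
proof -
  have sm: "\<forall>n. smn n (\<lambda>s. \<phi> (A * s + D))"
    using testfun_smn[OF \<phi>] by (auto intro: smn_affine)
  obtain c' d' where cd: "A * a + D < c'" "d' < A * b + D" and z: "\<forall>t. t \<notin> {c'..d'} \<longrightarrow> \<phi> t = 0"
    using \<phi> unfolding test_fun_def by blast
  have "a < (c' - D) / A" "(d' - D) / A < b" using cd A by (auto simp: field_simps)
  moreover have "\<forall>s. s \<notin> {(c' - D) / A..(d' - D) / A} \<longrightarrow> \<phi> (A * s + D) = 0"
  proof (intro allI impI)
    fix s assume "s \<notin> {(c' - D) / A..(d' - D) / A}"
    then have "A * s + D \<notin> {c'..d'}" using A by (auto simp: field_simps)
    then show "\<phi> (A * s + D) = 0" using z by blast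
  qed
  ultimately show ?thesis using sm unfolding test_fun_def smooth_iff by blast
qed

lemma testfun_mono:
  fixes a b c d :: real
  assumes "test_fun c d \<phi>" "a \<le> c" "d \<le> b"
  shows "test_fun a b \<phi>"
  using assms unfolding test_fun_def by (meson order_le_less_trans order_less_le_trans)

lemma testfun_zero_outside:
  fixes c d :: real
  assumes "test_fun c d \<phi>" "t \<notin> {c..d}"
  shows "(deriv ^^ j) \<phi> t = 0"
proof -
  obtain c' d' where cd: "c < c'" "d' < d" and z: "\<forall>t. t \<notin> {c'..d'} \<longrightarrow> \<phi> t = 0"
    using assms(1) unfolding test_fun_def by blast
  have "t \<notin> {c'..d'}" using assms(2) cd by auto
  then show ?thesis by (rule derivn_zero_outside[OF z])
qed

lemma local_ident:
  fixes a b A D \<beta> :: real and u h :: "real \<Rightarrow> real"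
  assumes ab: "a < b" and A: "A > 0" and p: "1 \<le> p"
    and sub: "a \<le> A * a + D" "A * b + D \<le> b"
    and u: "sobolev a b k p u" and h: "sobolev a b k p h" and j: "j \<le> k"
    and rel: "AE t in lebesgue_on {A * a + D..A * b + D}. u t = \<beta> * h ((t - D) / A)"
  shows "AE t in lebesgue_on {A * a + D..A * b + D}.
           wD a b p j u t = \<beta> * (1 / A) ^ j * wD a b p j h ((t - D) / A)"
proof -
  let ?c = "A * a + D" and ?d = "A * b + D"
  define W where "W = wD a b p j u"
  define V where "V = wD a b p j h"
  define Hh where "Hh t = \<beta> * (1 / A) ^ j * V ((t - D) / A)" for t
  have Wd: "weak_deriv a b j u W" and Vd: "weak_deriv a b j h V"
    using wD_prop[OF u j] wD_prop[OF h j] by (auto simp: W_def V_def)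
  have Wi: "integrable (lebesgue_on {a..b}) W" and Vi: "integrable (lebesgue_on {a..b}) V"
    and ui: "integrable (lebesgue_on {a..b}) u" and hi: "integrable (lebesgue_on {a..b}) h"
    using Wd Vd by (auto simp: weak_deriv_def)
  have subs: "{?c..?d} \<subseteq> {a..b}" using sub by auto
  have Wi': "integrable (lebesgue_on {?c..?d}) W" by (rule integrable_sub[OF Wi subs])
  have inv: "\<And>s. (A * s + D - D) / A = s" using A by simp
  have Hi': "integrable (lebesgue_on {?c..?d}) Hh"
  proof -
    have "integrable (lebesgue_on {a..b}) (\<lambda>s. Hh (A * s + D))"
      unfolding Hh_def inv using Vi by simp
    then show ?thesis by (subst CV_integrable[OF A])
  qed
  have "AE t in lebesgue_on {?c..?d}. W t - Hh t = 0"
  proof (rule FL)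
    show "integrable (lebesgue_on {?c..?d}) (\<lambda>t. W t - Hh t)" using Wi' Hi' by simp
    show "\<forall>\<phi>. test_fun ?c ?d \<phi> \<longrightarrow> (\<integral>t. (W t - Hh t) * \<phi> t \<partial>lebesgue_on {?c..?d}) = 0"
    proof (intro allI impI)
      fix \<phi> assume \<phi>: "test_fun ?c ?d \<phi>"
      have \<phi>ab: "test_fun a b \<phi>" using testfun_mono[OF \<phi> sub] .
      define \<phi>j where "\<phi>j = (deriv ^^ j) \<phi>"
      have z\<phi>: "\<And>t. t \<notin> {?c..?d} \<Longrightarrow> \<phi> t = 0" using testfun_zero_outside[OF \<phi>, of _ 0] by simp
      have z\<phi>j: "\<And>t. t \<notin> {?c..?d} \<Longrightarrow> \<phi>j t = 0" using testfun_zero_outside[OF \<phi>] by (simp add: \<phi>j_def)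
      define \<psi> where "\<psi> s = \<phi> (A * s + D)" for s
      have \<psi>: "test_fun a b \<psi>" unfolding \<psi>_def by (rule testfun_affine[OF A \<phi>])
      have \<psi>j: "(deriv ^^ j) \<psi> = (\<lambda>s. A ^ j * \<phi>j (A * s + D))"
        unfolding \<psi>_def \<phi>j_def by (rule deriv_affine_funpow) (use testfun_smn[OF \<phi>] in auto)
      have E1: "(\<integral>t. W t * \<phi> t \<partial>lebesgue_on {?c..?d}) = (\<integral>t. W t * \<phi> t \<partial>lebesgue_on {a..b})"
        by (rule int_sub_eq[OF subs]) (simp add: z\<phi>)
      have E2: "(\<integral>t. u t * \<phi>j t \<partial>lebesgue_on {a..b}) = (-1) ^ j * (\<integral>t. W t * \<phi> t \<partial>lebesgue_on {a..b})"
        using Wd \<phi>ab unfolding weak_deriv_def \<phi>j_def by blast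
      have E3: "(\<integral>t. u t * \<phi>j t \<partial>lebesgue_on {a..b}) = (\<integral>t. u t * \<phi>j t \<partial>lebesgue_on {?c..?d})"
        by (rule int_sub_eq[OF subs, symmetric]) (simp add: z\<phi>j)
      have E4: "(\<integral>t. u t * \<phi>j t \<partial>lebesgue_on {?c..?d}) = (\<integral>t. \<beta> * h ((t - D) / A) * \<phi>j t \<partial>lebesgue_on {?c..?d})"
      proof (rule integral_cong_AE)
        have um: "u \<in> borel_measurable (lebesgue_on {?c..?d})"
          by (rule meas_sub[OF borel_measurable_integrable[OF ui] subs])
        have pm: "\<phi>j \<in> borel_measurable (lebesgue_on {?c..?d})"
          unfolding \<phi>j_def by (rule continuous_imp_measurable_on_sets_lebesgue[OF testfun_cont[OF \<phi>]]) auto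
        have hm: "(\<lambda>t. h ((t - D) / A)) \<in> borel_measurable (lebesgue_on {?c..?d})"
          by (rule CV_meas_inv[OF A borel_measurable_integrable[OF hi]])
        show "(\<lambda>t. u t * \<phi>j t) \<in> borel_measurable (lebesgue_on {?c..?d})"
          using um pm by (rule borel_measurable_times)
        show "(\<lambda>t. \<beta> * h ((t - D) / A) * \<phi>j t) \<in> borel_measurable (lebesgue_on {?c..?d})"
          using hm pm by (intro borel_measurable_times borel_measurable_const)
        show "AE t in lebesgue_on {?c..?d}. u t * \<phi>j t = \<beta> * h ((t - D) / A) * \<phi>j t"
          using rel by eventually_elim simp
      qed
      have E5: "(\<integral>t. \<beta> * h ((t - D) / A) * \<phi>j t \<partial>lebesgue_on {?c..?d})
           = A * \<beta> * (\<integral>s. h s * \<phi>j (A * s + D) \<partial>lebesgue_on {a..b})"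
        by (subst CV_integral[OF A]) (use A in \<open>simp add: inv mult_ac\<close>)
      have E6: "(\<integral>s. h s * \<phi>j (A * s + D) \<partial>lebesgue_on {a..b})
           = (1 / A) ^ j * (\<integral>s. h s * (deriv ^^ j) \<psi> s \<partial>lebesgue_on {a..b})"
      proof -
        have "(\<lambda>s. h s * (A ^ j * \<phi>j (A * s + D))) = (\<lambda>s. A ^ j * (h s * \<phi>j (A * s + D)))"
          by (simp add: mult_ac)
        then show ?thesis using A by (simp add: \<psi>j power_one_over)
      qed
      have E7: "(\<integral>s. h s * (deriv ^^ j) \<psi> s \<partial>lebesgue_on {a..b}) = (-1) ^ j * (\<integral>s. V s * \<psi> s \<partial>lebesgue_on {a..b})"
        using Vd \<psi> unfolding weak_deriv_def by blast
      have E8: "(\<integral>t. V ((t - D) / A) * \<phi> t \<partial>lebesgue_on {?c..?d}) = A * (\<integral>s. V s * \<psi> s \<partial>lebesgue_on {a..b})"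
        by (subst CV_integral[OF A]) (use A in \<open>simp add: inv \<psi>_def\<close>)
      have sgn: "((-1::real) ^ j) * ((-1) ^ j) = 1" by (simp add: power_mult_distrib[symmetric])
      have "(\<integral>t. W t * \<phi> t \<partial>lebesgue_on {?c..?d}) = ((-1) ^ j * (-1) ^ j) * (\<integral>t. W t * \<phi> t \<partial>lebesgue_on {a..b})"
        using E1 sgn by simp
      also have "\<dots> = (-1) ^ j * (\<integral>t. u t * \<phi>j t \<partial>lebesgue_on {a..b})" using E2 by simp
      also have "\<dots> = (-1) ^ j * (A * \<beta> * ((1 / A) ^ j * ((-1) ^ j * (\<integral>s. V s * \<psi> s \<partial>lebesgue_on {a..b}))))"
        using E3 E4 E5 E6 E7 by simp
      also have "\<dots> = \<beta> * (1 / A) ^ j * (A * (\<integral>s. V s * \<psi> s \<partial>lebesgue_on {a..b}))"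
        using sgn by (simp add: mult_ac)
      also have "\<dots> = \<beta> * (1 / A) ^ j * (\<integral>t. V ((t - D) / A) * \<phi> t \<partial>lebesgue_on {?c..?d})"
        using E8 by simp
      also have "\<dots> = (\<integral>t. (\<beta> * (1 / A) ^ j) * (V ((t - D) / A) * \<phi> t) \<partial>lebesgue_on {?c..?d})"
        by (rule integral_mult_right_zero[symmetric])
      also have "\<dots> = (\<integral>t. Hh t * \<phi> t \<partial>lebesgue_on {?c..?d})"
        unfolding Hh_def by (simp only: mult.assoc)
      finally have eq: "(\<integral>t. W t * \<phi> t \<partial>lebesgue_on {?c..?d}) = (\<integral>t. Hh t * \<phi> t \<partial>lebesgue_on {?c..?d})" .
      have i1: "integrable (lebesgue_on {?c..?d}) (\<lambda>t. W t * \<phi> t)"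
        using integrable_mult_cont[OF Wi' testfun_cont[OF \<phi>, of _ 0]] by simp
      have i2: "integrable (lebesgue_on {?c..?d}) (\<lambda>t. Hh t * \<phi> t)"
        using integrable_mult_cont[OF Hi' testfun_cont[OF \<phi>, of _ 0]] by simp
      show "(\<integral>t. (W t - Hh t) * \<phi> t \<partial>lebesgue_on {?c..?d}) = 0"
        using eq i1 i2 by (simp add: left_diff_distrib)
    qed
  qed
  then show ?thesis by eventually_elim (simp add: W_def V_def Hh_def)
qed

lemma x_mono:
  fixes x :: "nat \<Rightarrow> real"
  assumes incr: "\<And>i. 1 \<le> i \<Longrightarrow> i < N \<Longrightarrow> x i < x (i+1)"
  shows "1 \<le> i \<Longrightarrow> i \<le> j \<Longrightarrow> j \<le> N \<Longrightarrow> x i \<le> x j"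
proof (induction j)
  case 0 then show ?case by simp
next
  case (Suc j)
  show ?case
  proof (cases "i = Suc j")
    case False
    then have "i \<le> j" using Suc.prems by simp
    then have "x i \<le> x j" using Suc by simp
    also have "x j < x (Suc j)" using incr[of j] Suc.prems \<open>i \<le> j\<close> by simp
    finally show ?thesis by simp
  qed simp
qed

lemma x_strict:
  fixes x :: "nat \<Rightarrow> real"
  assumes incr: "\<And>i. 1 \<le> i \<Longrightarrow> i < N \<Longrightarrow> x i < x (i+1)"
  shows "1 \<le> i \<Longrightarrow> i < j \<Longrightarrow> j \<le> N \<Longrightarrow> x i < x j"
proof -
  assume "1 \<le> i" "i < j" "j \<le> N"
  then have "x i < x (i+1)" using incr by simp
  also have "x (i+1) \<le> x j" using x_mono[where x=x and N=N, OF incr, of "i+1" j] \<open>1 \<le> i\<close> \<open>i < j\<close> \<open>j \<le> N\<close> by simp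
  finally show ?thesis .
qed

lemma cover:
  fixes x :: "nat \<Rightarrow> real"
  assumes incr: "\<And>i. 1 \<le> i \<Longrightarrow> i < N \<Longrightarrow> x i < x (i+1)" and N: "2 \<le> N"
  shows "t \<in> {x 1..x N} \<Longrightarrow> \<exists>i\<in>{1..N-1}. t \<in> {x i..x (i+1)}"
  using N incr
proof (induction N)
  case 0 then show ?case by simp
next
  case (Suc M)
  show ?case
  proof (cases "t \<le> x M \<and> 2 \<le> M")
    case True
    then have "t \<in> {x 1..x M}" using Suc.prems by auto
    then obtain i where "i \<in> {1..M-1}" "t \<in> {x i..x (i+1)}"
      using Suc.IH[of] True Suc.prems by auto
    then show ?thesis by auto
  next
    case False
    show ?thesis
    proof (cases "2 \<le> M")
      case True
      then have "x M \<le> t" using False by auto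
      then show ?thesis using Suc.prems True by (intro bexI[of _ M]) auto
    next
      case False
      then have "M = 1" using Suc.prems by simp
      then show ?thesis using Suc.prems by auto
    qed
  qed
qed

lemma aff_facts:
  fixes x :: "nat \<Rightarrow> real"
  assumes incr: "\<And>i. 1 \<le> i \<Longrightarrow> i < N \<Longrightarrow> x i < x (i+1)" and N: "N > 2" and i: "i \<in> {1..N-1}"
  shows "0 < aff_a x N i" "aff_a x N i < 1"
    "aff_a x N i * x 1 + aff_d x N i = x i" "aff_a x N i * x N + aff_d x N i = x (i+1)"
    "\<And>t. aff_inv x N i t = (t - aff_d x N i) / aff_a x N i"
    "x 1 \<le> x i" "x (i+1) \<le> x N"
proof -
  have i1: "1 \<le> i" "i < N" using i N by auto
  have ab: "x 1 < x N" using x_strict[where x=x and N=N, OF incr, of 1 N] N by simp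
  have xi: "x i < x (i+1)" using incr i1 by simp
  show "0 < aff_a x N i" using ab xi by (simp add: aff_a_def)
  show le1: "x 1 \<le> x i" using x_mono[where x=x and N=N, OF incr, of 1 i] i1 by simp
  show le2: "x (i+1) \<le> x N" using x_mono[where x=x and N=N, OF incr, of "i+1" N] i1 by simp
  have "x (i+1) - x i < x N - x 1"
  proof (cases "i = 1")
    case True
    then have "i + 1 < N" using N by simp
    then have "x (i+1) < x N" using x_strict[where x=x and N=N, OF incr, of "i+1" N] by simp
    then show ?thesis using True by simp
  next
    case False
    then have "x 1 < x i" using x_strict[where x=x and N=N, OF incr, of 1 i] i1 by simp
    then show ?thesis using le2 by simp
  qed
  then show "aff_a x N i < 1" using ab by (simp add: aff_a_def)
  show "aff_a x N i * x 1 + aff_d x N i = x i" by (simp add: aff_d_def)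
  show "aff_a x N i * x N + aff_d x N i = x (i+1)"
  proof -
    have e: "aff_a x N i * (x N - x 1) = x (i+1) - x i" using ab by (simp add: aff_a_def)
    then show ?thesis unfolding aff_d_def right_diff_distrib by linarith
  qed
  show "\<And>t. aff_inv x N i t = (t - aff_d x N i) / aff_a x N i" by (simp add: aff_inv_def)
qed

lemma piece_int:
  fixes a b A D \<gamma> P :: real and W V :: "real \<Rightarrow> real"
  assumes A: "A > 0" and sub: "a \<le> A * a + D" "A * b + D \<le> b"
    and Wm: "W \<in> borel_measurable (lebesgue_on {a..b})" and Vm: "V \<in> borel_measurable (lebesgue_on {a..b})"
    and rel: "AE t in lebesgue_on {A * a + D..A * b + D}. W t = \<gamma> * V ((t - D) / A)"
  shows "(\<integral>t. \<bar>W t\<bar> powr P \<partial>lebesgue_on {A * a + D..A * b + D})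
       = \<bar>\<gamma>\<bar> powr P * A * (\<integral>s. \<bar>V s\<bar> powr P \<partial>lebesgue_on {a..b})"
proof -
  let ?c = "A * a + D" and ?d = "A * b + D"
  have subs: "{?c..?d} \<subseteq> {a..b}" using sub by auto
  have Wm': "W \<in> borel_measurable (lebesgue_on {?c..?d})" by (rule meas_sub[OF Wm subs])
  have Vm': "(\<lambda>t. V ((t - D) / A)) \<in> borel_measurable (lebesgue_on {?c..?d})" by (rule CV_meas_inv[OF A Vm])
  have "(\<integral>t. \<bar>W t\<bar> powr P \<partial>lebesgue_on {?c..?d}) = (\<integral>t. \<bar>\<gamma>\<bar> powr P * \<bar>V ((t - D) / A)\<bar> powr P \<partial>lebesgue_on {?c..?d})"
  proof (rule integral_cong_AE)
    show "(\<lambda>t. \<bar>W t\<bar> powr P) \<in> borel_measurable (lebesgue_on {?c..?d})" using Wm' by measurable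
    show "(\<lambda>t. \<bar>\<gamma>\<bar> powr P * \<bar>V ((t - D) / A)\<bar> powr P) \<in> borel_measurable (lebesgue_on {?c..?d})"
      using Vm' by measurable
    show "AE t in lebesgue_on {?c..?d}. \<bar>W t\<bar> powr P = \<bar>\<gamma>\<bar> powr P * \<bar>V ((t - D) / A)\<bar> powr P"
      using rel by eventually_elim (simp add: abs_mult powr_mult)
  qed
  also have "\<dots> = \<bar>\<gamma>\<bar> powr P * (\<integral>t. \<bar>V ((t - D) / A)\<bar> powr P \<partial>lebesgue_on {?c..?d})" by simp
  also have "(\<integral>t. \<bar>V ((t - D) / A)\<bar> powr P \<partial>lebesgue_on {?c..?d}) = A * (\<integral>s. \<bar>V s\<bar> powr P \<partial>lebesgue_on {a..b})"
    by (subst CV_integral[OF A]) (use A in simp)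
  finally show ?thesis by (simp add: mult_ac)
qed

lemma cover_int:
  fixes x :: "nat \<Rightarrow> real" and F :: "real \<Rightarrow> real"
  assumes incr: "\<And>i. 1 \<le> i \<Longrightarrow> i < N \<Longrightarrow> x i < x (i+1)" and N: "N > 2"
    and Fi: "integrable (lebesgue_on {x 1..x N}) F" and F0: "\<And>t. 0 \<le> F t"
  shows "(\<integral>t. F t \<partial>lebesgue_on {x 1..x N}) \<le> (\<Sum>i=1..N-1. (\<integral>t. F t \<partial>lebesgue_on {x i..x (i+1)}))"
proof -
  have subi: "{x i..x (i+1)} \<subseteq> {x 1..x N}" if "i \<in> {1..N-1}" for i
    using aff_facts(6,7)[where x=x and N=N, OF incr N that] by auto
  have ii: "integrable lebesgue (\<lambda>t. indicator {x i..x (i+1)} t *\<^sub>R F t)" if "i \<in> {1..N-1}" for i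
    using integrable_sub[OF Fi subi[OF that]] by (subst (asm) integrable_restrict_space) auto
  have "(\<integral>t. F t \<partial>lebesgue_on {x 1..x N}) = (\<integral>t. indicator {x 1..x N} t *\<^sub>R F t \<partial>lebesgue)"
    by (subst integral_restrict_space) auto
  also have "\<dots> \<le> (\<integral>t. (\<Sum>i=1..N-1. indicator {x i..x (i+1)} t *\<^sub>R F t) \<partial>lebesgue)"
  proof (rule Bochner_Integration.integral_mono)
    show "integrable lebesgue (\<lambda>t. indicator {x 1..x N} t *\<^sub>R F t)"
      using Fi by (subst (asm) integrable_restrict_space) auto
    show "integrable lebesgue (\<lambda>t. \<Sum>i=1..N-1. indicator {x i..x (i+1)} t *\<^sub>R F t)"
      using ii by (intro Bochner_Integration.integrable_sum) auto
    fix t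
    show "indicator {x 1..x N} t *\<^sub>R F t \<le> (\<Sum>i=1..N-1. indicator {x i..x (i+1)} t *\<^sub>R F t)"
    proof (cases "t \<in> {x 1..x N}")
      case True
      then obtain i0 where i0: "i0 \<in> {1..N-1}" "t \<in> {x i0..x (i0+1)}" using cover[where x=x and N=N, OF incr] N by force
      have "indicator {x i0..x (i0+1)} t *\<^sub>R F t \<le> (\<Sum>i=1..N-1. indicator {x i..x (i+1)} t *\<^sub>R F t)"
        by (rule member_le_sum[OF i0(1)]) (auto simp: F0 indicator_def)
      then show ?thesis using True i0 by simp
    next
      case False
      have "0 \<le> (\<Sum>i=1..N-1. indicator {x i..x (i+1)} t *\<^sub>R F t)"
        by (intro sum_nonneg) (simp add: F0)
      then show ?thesis using False by simp
    qed
  qed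
  also have "\<dots> = (\<Sum>i=1..N-1. (\<integral>t. indicator {x i..x (i+1)} t *\<^sub>R F t \<partial>lebesgue))"
    using ii by (intro Bochner_Integration.integral_sum) auto
  also have "\<dots> = (\<Sum>i=1..N-1. (\<integral>t. F t \<partial>lebesgue_on {x i..x (i+1)}))"
    by (intro sum.cong refl) (subst integral_restrict_space, auto)
  finally show ?thesis .
qed

lemma pow_helper:
  fixes A P :: real
  assumes A: "0 < A" "A \<le> 1" and P: "0 \<le> P" and jk: "j \<le> k"
  shows "((1 / A) ^ j) powr P * A \<le> 1 / A powr (real k * P - 1)"
proof -
  have e1: "(1 / A) ^ j = 1 / A powr (real j)" using A by (simp add: powr_realpow power_one_over)
  have e2: "((1 / A) ^ j) powr P = 1 / A powr (real j * P)"
    unfolding e1 powr_divide using A by (simp add: powr_powr)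
  have e3: "A powr (real k * P - 1) = A powr (real k * P) / A"
    using A by (simp add: powr_diff)
  have m: "A powr (real k * P) \<le> A powr (real j * P)"
    using A P jk by (intro powr_mono') (auto intro: mult_right_mono)
  have pos: "0 < A powr (real k * P)" using A by simp
  have "((1 / A) ^ j) powr P * A = A / A powr (real j * P)" unfolding e2 by simp
  also have "\<dots> \<le> A / A powr (real k * P)"
    using m pos A by (intro divide_left_mono) auto
  also have "\<dots> = 1 / A powr (real k * P - 1)" unfolding e3 using A pos by simp
  finally show ?thesis .
qed

lemma T_fin:
  fixes x :: "nat \<Rightarrow> real" and N k :: nat and p :: ennreal and \<alpha> :: "nat \<Rightarrow> real" and u h :: "real \<Rightarrow> real"
  assumes N: "N > 2" and incr: "\<And>i. 1 \<le> i \<Longrightarrow> i < N \<Longrightarrow> x i < x (i+1)"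
    and p: "1 \<le> p" and pinf: "p \<noteq> \<infinity>"
    and u: "sobolev (x 1) (x N) k p u" and h: "sobolev (x 1) (x N) k p h"
    and rel: "\<And>i j. i \<in> {1..N-1} \<Longrightarrow> j \<le> k \<Longrightarrow> AE t in lebesgue_on {x i..x (i+1)}.
        wD (x 1) (x N) p j u t = \<alpha> i * (1 / aff_a x N i) ^ j * wD (x 1) (x N) p j h ((t - aff_d x N i) / aff_a x N i)"
  shows "sob_norm (x 1) (x N) k p u \<le> Kconst x N k p \<alpha> * sob_norm (x 1) (x N) k p h"
proof -
  define a where "a = x 1"
  define b where "b = x N"
  define P where "P = enn2real p"
  have P: "1 \<le> P" unfolding P_def using P_ge1[OF p pinf] .
  have ab: "a < b" unfolding a_def b_def using x_strict[where x=x and N=N, OF incr, of 1 N] N by simp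
  define S where "S = (\<Sum>i=1..N-1. \<bar>\<alpha> i\<bar> powr P / aff_a x N i powr (real k * P - 1))"
  have S0: "0 \<le> S" unfolding S_def by (intro sum_nonneg) simp
  have K: "Kconst x N k p \<alpha> = S powr (1 / P)" using pinf by (simp add: Kconst_def S_def P_def)
  define I where "I g j = (\<integral>t. \<bar>wD a b p j g t\<bar> powr P \<partial>lebesgue_on {a..b})" for g j
  have I0: "0 \<le> I g j" for g j unfolding I_def by (intro integral_nonneg_AE) auto
  have Ii: "integrable (lebesgue_on {a..b}) (\<lambda>t. \<bar>wD a b p j g t\<bar> powr P)" if "sobolev a b k p g" "j \<le> k" for g j
    using wD_prop[OF that] in_Lp_fin[OF pinf] unfolding P_def by blast
  have Lp: "Lp_norm {a..b} p (wD a b p j g) = I g j powr (1 / P)" if "sobolev a b k p g" "j \<le> k" for g j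
    using Lp_norm_fin[OF pinf] wD_prop[OF that] unfolding I_def P_def by blast
  have sob: "sob_norm a b k p g = (\<Sum>j\<le>k. I g j) powr (1 / P)" if "sobolev a b k p g" for g
  proof -
    have "(\<Sum>j\<le>k. Lp_norm {a..b} p (wD a b p j g) powr enn2real p) = (\<Sum>j\<le>k. I g j)"
      using Lp[OF that] I0 P unfolding P_def[symmetric] by (intro sum.cong refl) (simp add: powr_powr)
    then show ?thesis using pinf by (simp add: sob_norm_def P_def)
  qed
  have u': "sobolev a b k p u" and h': "sobolev a b k p h" using u h by (simp_all add: a_def b_def)
  have step: "I u j \<le> S * I h j" if j: "j \<le> k" for j
  proof -
    let ?W = "wD a b p j u" and ?V = "wD a b p j h"
    have "I u j \<le> (\<Sum>i=1..N-1. (\<integral>t. \<bar>?W t\<bar> powr P \<partial>lebesgue_on {x i..x (i+1)}))"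
      unfolding I_def a_def b_def
      by (rule cover_int[where x=x and N=N, OF incr N]) (use Ii[OF u' j] in \<open>auto simp: a_def b_def\<close>)
    also have "\<dots> = (\<Sum>i=1..N-1. \<bar>\<alpha> i * (1 / aff_a x N i) ^ j\<bar> powr P * aff_a x N i * I h j)"
    proof (rule sum.cong[OF refl])
      fix i assume i: "i \<in> {1..N-1}"
      note af = aff_facts[where x=x and N=N, OF incr N i]
      have "(\<integral>t. \<bar>?W t\<bar> powr P \<partial>lebesgue_on {aff_a x N i * a + aff_d x N i..aff_a x N i * b + aff_d x N i})
          = \<bar>\<alpha> i * (1 / aff_a x N i) ^ j\<bar> powr P * aff_a x N i * (\<integral>s. \<bar>?V s\<bar> powr P \<partial>lebesgue_on {a..b})"
      proof (rule piece_int)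
        show "0 < aff_a x N i" using af by simp
        show "a \<le> aff_a x N i * a + aff_d x N i" "aff_a x N i * b + aff_d x N i \<le> b"
          using af by (auto simp: a_def b_def)
        show "?W \<in> borel_measurable (lebesgue_on {a..b})" "?V \<in> borel_measurable (lebesgue_on {a..b})"
          using wD_prop[OF u' j] wD_prop[OF h' j] by (auto intro: in_Lp_meas)
        show "AE t in lebesgue_on {aff_a x N i * a + aff_d x N i..aff_a x N i * b + aff_d x N i}.
            ?W t = \<alpha> i * (1 / aff_a x N i) ^ j * ?V ((t - aff_d x N i) / aff_a x N i)"
        proof -
          have iv: "{aff_a x N i * a + aff_d x N i..aff_a x N i * b + aff_d x N i} = {x i..x (i+1)}"
            using af unfolding a_def b_def by simp
          show ?thesis unfolding iv using rel[OF i j] unfolding a_def b_def .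
        qed
      qed
      then show "(\<integral>t. \<bar>?W t\<bar> powr P \<partial>lebesgue_on {x i..x (i+1)})
          = \<bar>\<alpha> i * (1 / aff_a x N i) ^ j\<bar> powr P * aff_a x N i * I h j"
        using af by (simp add: a_def b_def I_def)
    qed
    also have "\<dots> \<le> (\<Sum>i=1..N-1. \<bar>\<alpha> i\<bar> powr P / aff_a x N i powr (real k * P - 1) * I h j)"
    proof (rule sum_mono)
      fix i assume i: "i \<in> {1..N-1}"
      note af = aff_facts[where x=x and N=N, OF incr N i]
      have "\<bar>\<alpha> i * (1 / aff_a x N i) ^ j\<bar> powr P * aff_a x N i
          = \<bar>\<alpha> i\<bar> powr P * (((1 / aff_a x N i) ^ j) powr P * aff_a x N i)"
        using af by (simp add: abs_mult powr_mult)
      also have "\<dots> \<le> \<bar>\<alpha> i\<bar> powr P * (1 / aff_a x N i powr (real k * P - 1))"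
        using pow_helper[of "aff_a x N i" P j k] af P j by (intro mult_left_mono) auto
      finally show "\<bar>\<alpha> i * (1 / aff_a x N i) ^ j\<bar> powr P * aff_a x N i * I h j
          \<le> \<bar>\<alpha> i\<bar> powr P / aff_a x N i powr (real k * P - 1) * I h j"
        using I0[of h j] by (intro mult_right_mono) auto
    qed
    also have "\<dots> = S * I h j" unfolding S_def by (simp add: sum_distrib_right)
    finally show ?thesis .
  qed
  have "(\<Sum>j\<le>k. I u j) \<le> (\<Sum>j\<le>k. S * I h j)" using step by (intro sum_mono) auto
  then have "(\<Sum>j\<le>k. I u j) powr (1 / P) \<le> (S * (\<Sum>j\<le>k. I h j)) powr (1 / P)"
    using P I0 by (intro powr_mono2) (auto intro: sum_nonneg simp: sum_distrib_left)
  also have "\<dots> = S powr (1 / P) * (\<Sum>j\<le>k. I h j) powr (1 / P)"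
    using S0 I0 by (simp add: powr_mult sum_nonneg)
  finally show ?thesis using sob[OF u'] sob[OF h'] K by (simp add: a_def b_def)
qed


lemma T_inf:
  fixes x :: "nat \<Rightarrow> real" and N k :: nat and p :: ennreal and \<alpha> :: "nat \<Rightarrow> real" and u h :: "real \<Rightarrow> real"
  assumes N: "N > 2" and incr: "\<And>i. 1 \<le> i \<Longrightarrow> i < N \<Longrightarrow> x i < x (i+1)"
    and pinf: "p = \<infinity>"
    and u: "sobolev (x 1) (x N) k p u" and h: "sobolev (x 1) (x N) k p h"
    and rel: "\<And>i j. i \<in> {1..N-1} \<Longrightarrow> j \<le> k \<Longrightarrow> AE t in lebesgue_on {x i..x (i+1)}.
        wD (x 1) (x N) p j u t = \<alpha> i * (1 / aff_a x N i) ^ j * wD (x 1) (x N) p j h ((t - aff_d x N i) / aff_a x N i)"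
  shows "sob_norm (x 1) (x N) k p u \<le> Kconst x N k p \<alpha> * sob_norm (x 1) (x N) k p h"
proof -
  define a where "a = x 1"
  define b where "b = x N"
  have ab: "a < b" unfolding a_def b_def using x_strict[where x=x and N=N, OF incr, of 1 N] N by simp
  define K where "K = Kconst x N k p \<alpha>"
  have Kdef: "K = Max ((\<lambda>i. \<bar>\<alpha> i\<bar> / aff_a x N i ^ k) ` {1..N-1})" using pinf by (simp add: K_def Kconst_def)
  have Kge: "\<bar>\<alpha> i\<bar> / aff_a x N i ^ k \<le> K" if "i \<in> {1..N-1}" for i
    unfolding Kdef using that by (intro Max_ge) auto
  have u': "sobolev a b k p u" and h': "sobolev a b k p h" using u h by (simp_all add: a_def b_def)
  let ?M = "lebesgue_on {a..b}"
  have step: "Lp_norm {a..b} p (wD a b p j u) \<le> K * Lp_norm {a..b} p (wD a b p j h)" if j: "j \<le> k" for j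
  proof -
    let ?W = "wD a b p j u" and ?V = "wD a b p j h"
    have Wm: "?W \<in> borel_measurable ?M" and Vm: "?V \<in> borel_measurable ?M"
      using wD_prop[OF u' j] wD_prop[OF h' j] by (auto intro: in_Lp_meas)
    have Vf: "esssup ?M (\<lambda>t. ereal \<bar>?V t\<bar>) < \<infinity>" using wD_prop[OF h' j] pinf by (simp add: in_Lp_def)
    define e where "e = real_of_ereal (esssup ?M (\<lambda>t. ereal \<bar>?V t\<bar>))"
    have E: "esssup ?M (\<lambda>t. ereal \<bar>?V t\<bar>) = ereal e"
      using Vf esssup_abs_nonneg[OF ab, of ?V] unfolding e_def by (cases "esssup ?M (\<lambda>t. ereal \<bar>?V t\<bar>)") auto
    have e0: "0 \<le> e" using esssup_abs_nonneg[OF ab, of ?V] E by simp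
    have Vae: "AE s in ?M. \<bar>?V s\<bar> \<le> e" using esssup_AE[of "\<lambda>t. ereal \<bar>?V t\<bar>" ?M] E by simp
    have piece: "AE t in lebesgue. t \<in> {x i..x (i+1)} \<longrightarrow> \<bar>?W t\<bar> \<le> K * e" if i: "i \<in> {1..N-1}" for i
    proof -
      note af = aff_facts[where x=x and N=N, OF incr N i]
      define A where "A = aff_a x N i"
      define D where "D = aff_d x N i"
      have A: "0 < A" "A < 1" using af by (auto simp: A_def)
      have iv: "{A * a + D..A * b + D} = {x i..x (i+1)}" using af unfolding a_def b_def A_def D_def by simp
      have Gm: "(\<lambda>t. ?V ((t - D) / A)) \<in> borel_measurable (lebesgue_on {A * a + D..A * b + D})"
        by (rule CV_meas_inv[OF A(1) Vm])
      then have "(\<lambda>t. indicator {A * a + D..A * b + D} t *\<^sub>R ?V ((t - D) / A)) \<in> borel_measurable lebesgue"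
        by (subst (asm) borel_measurable_restrict_space_iff) auto
      then have setm: "{t \<in> space lebesgue. \<bar>indicator {A * a + D..A * b + D} t *\<^sub>R ?V ((t - D) / A)\<bar> \<le> e} \<in> sets lebesgue"
        by measurable
      have seteq: "{t \<in> space lebesgue. t \<in> {A * a + D..A * b + D} \<longrightarrow> \<bar>?V ((t - D) / A)\<bar> \<le> e}
          = {t \<in> space lebesgue. \<bar>indicator {A * a + D..A * b + D} t *\<^sub>R ?V ((t - D) / A)\<bar> \<le> e}"
        using e0 by (auto simp: indicator_def)
      have ae1: "AE t in lebesgue_on {A * a + D..A * b + D}. \<bar>?V ((t - D) / A)\<bar> \<le> e"
        by (rule CV_AE[OF A(1) _ Vae]) (use setm seteq in simp)
      have ae2: "AE t in lebesgue_on {A * a + D..A * b + D}. ?W t = \<alpha> i * (1 / A) ^ j * ?V ((t - D) / A)"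
        using rel[OF i j] unfolding iv[symmetric] unfolding A_def D_def a_def b_def .
      have bnd: "\<bar>\<alpha> i\<bar> * (1 / A) ^ j \<le> K"
      proof -
        have "(1 / A) ^ j \<le> (1 / A) ^ k" using A j by (intro power_increasing) auto
        then have "\<bar>\<alpha> i\<bar> * (1 / A) ^ j \<le> \<bar>\<alpha> i\<bar> * (1 / A) ^ k" by (intro mult_left_mono) auto
        also have "\<dots> = \<bar>\<alpha> i\<bar> / aff_a x N i ^ k" by (simp add: A_def power_one_over)
        also have "\<dots> \<le> K" by (rule Kge[OF i])
        finally show ?thesis .
      qed
      have "AE t in lebesgue_on {A * a + D..A * b + D}. \<bar>?W t\<bar> \<le> K * e"
        using ae1 ae2
      proof eventually_elim
        case (elim t)
        have "0 \<le> \<bar>\<alpha> i\<bar> * (1 / A) ^ j" using A by simp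
        then have K0: "0 \<le> K" using bnd by linarith
        have "\<bar>?W t\<bar> = \<bar>\<alpha> i\<bar> * (1 / A) ^ j * \<bar>?V ((t - D) / A)\<bar>"
          using elim A by (simp add: abs_mult)
        also have "\<dots> \<le> K * e" using bnd elim e0 A K0 by (intro mult_mono) auto
        finally show ?case .
      qed
      then show ?thesis unfolding iv by (subst (asm) AE_restrict_space_iff) auto
    qed
    have "AE t in lebesgue. \<forall>i\<in>{1..N-1}. t \<in> {x i..x (i+1)} \<longrightarrow> \<bar>?W t\<bar> \<le> K * e"
      by (rule AE_finite_allI) (simp, rule piece)
    then have "AE t in lebesgue. t \<in> {a..b} \<longrightarrow> \<bar>?W t\<bar> \<le> K * e"
    proof eventually_elim
      case (elim t)
      show ?case
      proof
        assume "t \<in> {a..b}"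
        then obtain i where "i \<in> {1..N-1}" "t \<in> {x i..x (i+1)}"
          using cover[where x=x and N=N, OF incr] N unfolding a_def b_def by force
        then show "\<bar>?W t\<bar> \<le> K * e" using elim by blast
      qed
    qed
    then have "AE t in ?M. ereal \<bar>?W t\<bar> \<le> ereal (K * e)" by (subst AE_restrict_space_iff) auto
    then have "esssup ?M (\<lambda>t. ereal \<bar>?W t\<bar>) \<le> ereal (K * e)"
      by (intro esssup_I) (use Wm in measurable)
    then have "real_of_ereal (esssup ?M (\<lambda>t. ereal \<bar>?W t\<bar>)) \<le> real_of_ereal (ereal (K * e))"
      by (rule real_of_ereal_mono'[OF esssup_abs_nonneg[OF ab]]) simp
    then show ?thesis using pinf by (simp add: Lp_norm_def e_def)
  qed
  have "(\<Sum>j\<le>k. Lp_norm {a..b} p (wD a b p j u)) \<le> (\<Sum>j\<le>k. K * Lp_norm {a..b} p (wD a b p j h))"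
    using step by (intro sum_mono) auto
  then show ?thesis using pinf by (simp add: sob_norm_def sum_distrib_left a_def b_def K_def)
qed

theorem mainTheorem6:
  fixes x :: "nat \<Rightarrow> real" and N k :: nat and p :: ennreal
    and L :: "(real \<Rightarrow> real) \<Rightarrow> (real \<Rightarrow> real)" and \<alpha> :: "nat \<Rightarrow> real"
    and f g :: "real \<Rightarrow> real"
  assumes N: "N > 2"
    and incr: "\<And>i. 1 \<le> i \<Longrightarrow> i < N \<Longrightarrow> x i < x (i+1)"
    and p: "1 \<le> p"
    and L_bl: "bounded_linear_sob (x 1) (x N) k p L"
    and L_bc: "\<And>h r. sobolev (x 1) (x N) k p h \<Longrightarrow> r < k \<Longrightarrow>
               dval (x 1) (x N) r (L h) (x 1) = dval (x 1) (x N) r h (x 1) \<and>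
               dval (x 1) (x N) r (L h) (x N) = dval (x 1) (x N) r h (x N)"
    and K: "Kconst x N k p \<alpha> < 1"
    and f: "sobolev (x 1) (x N) k p f"
    and g: "is_alpha_fractal x N k p L \<alpha> f g"
  shows "sob_norm (x 1) (x N) k p (\<lambda>t. g t - f t)
         \<le> Kconst x N k p \<alpha> / (1 - Kconst x N k p \<alpha>)
            * opnorm_Id_minus (x 1) (x N) k p L * sob_norm (x 1) (x N) k p f"
proof -
  define a where "a = x 1"
  define b where "b = x N"
  have ab: "a < b" unfolding a_def b_def using x_strict[where x=x and N=N, OF incr, of 1 N] N by simp
  have gs: "sobolev a b k p g" using g by (simp add: is_alpha_fractal_def a_def b_def)
  have fs: "sobolev a b k p f" using f by (simp add: a_def b_def)
  have Ls: "sobolev a b k p (L f)" using L_bl fs by (simp add: bounded_linear_sob_def a_def b_def)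
  define u where "u = (\<lambda>t. g t - f t)"
  define h where "h = (\<lambda>t. g t - L f t)"
  have us: "sobolev a b k p u" unfolding u_def by (rule sobolev_diff[OF ab p gs fs])
  have hs: "sobolev a b k p h" unfolding h_def by (rule sobolev_diff[OF ab p gs Ls])
  have fLs: "sobolev a b k p (\<lambda>t. f t - L f t)" by (rule sobolev_diff[OF ab p fs Ls])
  have rel: "AE t in lebesgue_on {x i..x (i+1)}.
        wD (x 1) (x N) p j u t = \<alpha> i * (1 / aff_a x N i) ^ j * wD (x 1) (x N) p j h ((t - aff_d x N i) / aff_a x N i)"
    if i: "i \<in> {1..N-1}" and j: "j \<le> k" for i j
  proof -
    note af = aff_facts[where x=x and N=N, OF incr N i]
    define A where "A = aff_a x N i"
    define D where "D = aff_d x N i"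
    have A: "0 < A" using af by (simp add: A_def)
    have iv: "{A * a + D..A * b + D} = {x i..x (i+1)}" using af unfolding a_def b_def A_def D_def by simp
    have rel0: "AE t in lebesgue_on {A * a + D..A * b + D}. u t = \<alpha> i * h ((t - D) / A)"
    proof -
      have fr: "AE t in lebesgue. t \<in> subint x N i \<longrightarrow>
          g t = f t + \<alpha> i * (g (aff_inv x N i t) - L f (aff_inv x N i t))"
        using g i by (simp add: is_alpha_fractal_def)
      have ne: "AE t in lebesgue. t \<noteq> x (i+1)" by (intro AE_completion AE_lborel_singleton)
      have "AE t in lebesgue. t \<in> {x i..x (i+1)} \<longrightarrow> u t = \<alpha> i * h ((t - D) / A)"
        using fr ne
      proof eventually_elim
        case (elim t)
        show ?case
        proof
          assume t: "t \<in> {x i..x (i+1)}"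
          then have "t \<in> subint x N i" using elim by (auto simp: subint_def)
          then show "u t = \<alpha> i * h ((t - D) / A)"
            using elim af by (simp add: u_def h_def A_def D_def)
        qed
      qed
      then show ?thesis unfolding iv by (subst AE_restrict_space_iff) auto
    qed
    have "AE t in lebesgue_on {A * a + D..A * b + D}.
        wD a b p j u t = \<alpha> i * (1 / A) ^ j * wD a b p j h ((t - D) / A)"
    proof (rule local_ident[OF ab A p _ _ us hs j rel0])
      have e1: "A * a + D = x i" using af by (simp add: A_def D_def a_def)
      have e2: "A * b + D = x (i+1)" using af by (simp add: A_def D_def b_def)
      show "a \<le> A * a + D" "A * b + D \<le> b" unfolding e1 e2 using af by (simp_all add: a_def b_def)
    qed
    then show ?thesis unfolding iv unfolding A_def D_def a_def b_def .
  qed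
  have us': "sobolev (x 1) (x N) k p u" and hs': "sobolev (x 1) (x N) k p h"
    using us hs by (simp_all add: a_def b_def)
  have T: "sob_norm a b k p u \<le> Kconst x N k p \<alpha> * sob_norm a b k p h"
  proof (cases "p = \<infinity>")
    case True
    show ?thesis using T_inf[OF N incr True us' hs' rel] by (simp add: a_def b_def)
  next
    case False
    show ?thesis using T_fin[OF N incr p False us' hs' rel] by (simp add: a_def b_def)
  qed
  have hsplit: "h = (\<lambda>t. u t + (f t - L f t))" by (simp add: h_def u_def fun_eq_iff)
  have H: "sob_norm a b k p h \<le> sob_norm a b k p u + sob_norm a b k p (\<lambda>t. f t - L f t)"
    unfolding hsplit by (rule sob_tri[OF ab p us fLs])
  have O: "sob_norm a b k p (\<lambda>t. f t - L f t) \<le> opnorm_Id_minus a b k p L * sob_norm a b k p f"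
    by (rule opnorm_bound[OF ab p _ fs]) (use L_bl in \<open>simp add: a_def b_def\<close>)
  define Kc where "Kc = Kconst x N k p \<alpha>"
  have K0: "0 \<le> Kc"
  proof (cases "p = \<infinity>")
    case True
    have "1 \<in> {1..N-1}" using N by simp
    then have "\<bar>\<alpha> 1\<bar> / aff_a x N 1 ^ k \<le> Max ((\<lambda>i. \<bar>\<alpha> i\<bar> / aff_a x N i ^ k) ` {1..N-1})"
      by (intro Max_ge) auto
    moreover have "0 \<le> \<bar>\<alpha> 1\<bar> / aff_a x N 1 ^ k"
      using aff_facts(1)[where x=x and N=N, OF incr N \<open>1 \<in> {1..N-1}\<close>] by simp
    ultimately show ?thesis using True by (simp add: Kc_def Kconst_def)
  next
    case False
    then show ?thesis by (simp add: Kc_def Kconst_def)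
  qed
  have K1: "Kc < 1" using K by (simp add: Kc_def)
  define n where "n = sob_norm a b k p u"
  define M where "M = sob_norm a b k p (\<lambda>t. f t - L f t)"
  define s where "s = sob_norm a b k p f"
  define opn where "opn = opnorm_Id_minus a b k p L"
  have "n \<le> Kc * (n + M)"
  proof -
    have "n \<le> Kc * sob_norm a b k p h" using T by (simp add: n_def Kc_def)
    also have "\<dots> \<le> Kc * (n + M)" using H K0 by (intro mult_left_mono) (auto simp: n_def M_def)
    finally show ?thesis .
  qed
  then have "n * (1 - Kc) \<le> Kc * M" by (simp add: algebra_simps)
  then have "n \<le> Kc * M / (1 - Kc)" using K1 by (simp add: field_simps)
  also have "\<dots> = Kc / (1 - Kc) * M" by simp
  also have "\<dots> \<le> Kc / (1 - Kc) * (opn * s)"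
    using O K0 K1 by (intro mult_left_mono) (auto simp: M_def opn_def s_def)
  finally have "n \<le> Kc / (1 - Kc) * opn * s" by (simp add: mult.assoc)
  then show ?thesis by (simp add: n_def Kc_def opn_def s_def u_def a_def b_def)
qed

end
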